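(* Consider an $[[n,k]]$ stabilizer code with stabilizer group $\mathcal S$, Clifford encoder $U_E$ and a set of syndrome representatives $T$, with encoding channel $\mathcal U$ and decoding channel $\mathcal D$, and let $\mathcal N=\mathcal T_p^{\otimes n}$ be the $n$-qubit depolarizing channel with rate $p$. Then \[ F_C(\mathcal D\mathcal N\mathcal U)=\sum_{E\in T\times\mathcal S}p_E=\sum_{w=0}^n a_w q_w, \] where $a_w$ is the number of elements of $T\times\mathcal S=\{hg:h\in T,\ g\in\mathcal S\}$ (Pauli operators up to phase) of weight $w$, $p_E$ is the probability of the Pauli error $E$ under $\mathcal N$, and $q_w=(1-\frac34p)^{n-w}(\frac14p)^w$. That is, the channel fidelity is the weight enumerator of $T\times\mathcal S$ evaluated on the probabilities $\{q_w\}$.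
   Context: Channel fidelity: for a channel $\mathcal E$ on an $m$-dimensional space with Kraus operators $\{K_i\}$, $F_C(\mathcal E)=\langle\psi|(I\otimes\mathcal E)(|\psi\rangle\langle\psi|)|\psi\rangle=\frac1{m^2}\sum_i|\mathrm{tr}K_i|^2$ with $|\psi\rangle=m^{-1/2}\sum_j|j\rangle|j\rangle$. Code setup: Pauli operators are tensor products of $I,X,Y,Z$ (up to phase); weight is the number of non-identity factors. $U_E$ is an $n$-qubit Clifford unitary, and $\mathcal S$ is generated by $g_j=U_EZ_{j+k}U_E^\dagger$, $j=1,\dots,n-k$. The syndrome of a Pauli $E$ is $s\in\{0,1\}^{n-k}$, $s_j=0$ iff $E$ commutes with $g_j$; $P_s=\prod_j\frac{I+(-1)^{s_j}g_j}{2}$. $T$ contains one Pauli $E_s$ of syndrome $s$ for each $s$, with $E_0=I$, and $C_s=E_s$. Encoding: $\mathcal U(\rho)=U_E(\rho\otimes|0\rangle\langle0|^{\otimes n-k})U_E^\dagger$ on $k$-qubit states $\rho$. Decoding: $\mathcal D(\rho')=\mathrm{tr}_{\mathrm{anc}}\big(\sum_sU_E^\dagger C_sP_s\rho'P_sC_s^\dagger U_E\big)$, the partial trace being over the last $n-k$ (ancilla) qubits. The depolarizing channel $\mathcal T_p(\rho)=(1-\frac34p)\rho+\frac p4(X\rho X+Y\rho Y+Z\rho Z)$ acts independently on each of the $n$ qubits, so a Pauli error of weight $w$ occurs with probability $q_w$. *)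

theory Defs
  imports Complex_Main "Jordan_Normal_Form.Matrix"
begin

definition adj :: "complex mat \<Rightarrow> complex mat" where
  "adj A = mat (dim_col A) (dim_row A) (\<lambda>(i,j). cnj (A $$ (j,i)))"

definition msum :: "nat \<Rightarrow> ('i \<Rightarrow> complex mat) \<Rightarrow> 'i set \<Rightarrow> complex mat" where
  "msum d f A = mat d d (\<lambda>(r,c). \<Sum>x\<in>A. f x $$ (r,c))"

text \<open>Kronecker (tensor) product; the first factor is the most significant index.\<close>
definition kron :: "complex mat \<Rightarrow> complex mat \<Rightarrow> complex mat" where
  "kron A B = mat (dim_row A * dim_row B) (dim_col A * dim_col B)
     (\<lambda>(i,j). A $$ (i div dim_row B, j div dim_col B) * B $$ (i mod dim_row B, j mod dim_col B))"

definition ebasis :: "nat \<Rightarrow> nat \<Rightarrow> nat \<Rightarrow> complex mat" where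
  "ebasis d i j = mat d d (\<lambda>(r,c). if r = i \<and> c = j then 1 else 0)"

definition ptrace2 :: "nat \<Rightarrow> nat \<Rightarrow> complex mat \<Rightarrow> complex mat" where
  "ptrace2 a b M = mat a a (\<lambda>(i,j). \<Sum>l<b. M $$ (i*b + l, j*b + l))"

text \<open>Tensor product of two linear maps on matrices (dimensions a and b),
  defined by linear extension of (Phi (x) Psi)(|i><j| (x) |k><l|) = Phi(|i><j|) (x) Psi(|k><l|).\<close>
definition superop_tensor :: "nat \<Rightarrow> nat \<Rightarrow> (complex mat \<Rightarrow> complex mat) \<Rightarrow> (complex mat \<Rightarrow> complex mat)
    \<Rightarrow> complex mat \<Rightarrow> complex mat" where
  "superop_tensor a b \<Phi> \<Psi> M =
     msum (a*b) (\<lambda>((i,j),(k,l)). M $$ (i*b + k, j*b + l) \<cdot>\<^sub>m kron (\<Phi> (ebasis a i j)) (\<Psi> (ebasis b k l)))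
       (({..<a} \<times> {..<a}) \<times> ({..<b} \<times> {..<b}))"

text \<open>Maximally entangled vector psi = m^(-1/2) sum_j |j>|j> in dimension m*m.\<close>
definition max_ent :: "nat \<Rightarrow> nat \<Rightarrow> complex" where
  "max_ent m x = (if x div m = x mod m then complex_of_real (1 / sqrt (real m)) else 0)"

definition chan_fid :: "nat \<Rightarrow> (complex mat \<Rightarrow> complex mat) \<Rightarrow> complex" where
  "chan_fid m \<E> =
     (let \<rho> = mat (m*m) (m*m) (\<lambda>(x,y). max_ent m x * cnj (max_ent m y));
          \<sigma> = superop_tensor m m (\<lambda>M. M) \<E> \<rho>
      in \<Sum>x<m*m. \<Sum>y<m*m. cnj (max_ent m x) * \<sigma> $$ (x,y) * max_ent m y)"

datatype pauli = PI | PX | PY | PZ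

definition pauli_mat :: "pauli \<Rightarrow> complex mat" where
  "pauli_mat a = (case a of
      PI \<Rightarrow> mat_of_rows_list 2 [[1, 0], [0, 1]]
    | PX \<Rightarrow> mat_of_rows_list 2 [[0, 1], [1, 0]]
    | PY \<Rightarrow> mat_of_rows_list 2 [[0, -\<i>], [\<i>, 0]]
    | PZ \<Rightarrow> mat_of_rows_list 2 [[1, 0], [0, -1]])"

text \<open>Matrix of a tensor product of Paulis; list position 0 is qubit 1.\<close>
fun pmat :: "pauli list \<Rightarrow> complex mat" where
  "pmat [] = 1\<^sub>m 1"
| "pmat (a # xs) = kron (pauli_mat a) (pmat xs)"

definition paulis :: "nat \<Rightarrow> pauli list set" where
  "paulis n = {P. length P = n}"

definition weight :: "pauli list \<Rightarrow> nat" where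
  "weight P = length (filter (\<lambda>a. a \<noteq> PI) P)"

text \<open>Z on qubit i (1-indexed), identity elsewhere.\<close>
definition Z_at :: "nat \<Rightarrow> nat \<Rightarrow> pauli list" where
  "Z_at n i = map (\<lambda>t. if t + 1 = i then PZ else PI) [0..<n]"

definition unitary_mat :: "nat \<Rightarrow> complex mat \<Rightarrow> bool" where
  "unitary_mat d U \<longleftrightarrow> U \<in> carrier_mat d d \<and> adj U * U = 1\<^sub>m d \<and> U * adj U = 1\<^sub>m d"

definition clifford :: "nat \<Rightarrow> complex mat \<Rightarrow> bool" where
  "clifford n U \<longleftrightarrow> unitary_mat (2^n) U \<and>
     (\<forall>P\<in>paulis n. \<exists>Q\<in>paulis n. \<exists>c. cmod c = 1 \<and> U * pmat P * adj U = c \<cdot>\<^sub>m pmat Q)"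

definition gen :: "nat \<Rightarrow> nat \<Rightarrow> complex mat \<Rightarrow> nat \<Rightarrow> complex mat" where
  "gen n k U j = U * pmat (Z_at n (j + k)) * adj U"

inductive_set stabilizer :: "nat \<Rightarrow> nat \<Rightarrow> complex mat \<Rightarrow> complex mat set" for n k U where
  one: "1\<^sub>m (2^n) \<in> stabilizer n k U"
| mul: "M \<in> stabilizer n k U \<Longrightarrow> j \<in> {1..n-k} \<Longrightarrow> M * gen n k U j \<in> stabilizer n k U"
| mul_inv: "M \<in> stabilizer n k U \<Longrightarrow> j \<in> {1..n-k} \<Longrightarrow> M * adj (gen n k U j) \<in> stabilizer n k U"

text \<open>Syndromes are bit strings (True = 1) of length n-k; entry j-1 is s_j.\<close>
definition syndromes :: "nat \<Rightarrow> bool list set" where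
  "syndromes m = {s. length s = m}"

definition syndrome :: "nat \<Rightarrow> nat \<Rightarrow> complex mat \<Rightarrow> pauli list \<Rightarrow> bool list" where
  "syndrome n k U E = map (\<lambda>j. \<not> (pmat E * gen n k U j = gen n k U j * pmat E)) [1..<n-k+1]"

definition proj :: "nat \<Rightarrow> nat \<Rightarrow> complex mat \<Rightarrow> bool list \<Rightarrow> complex mat" where
  "proj n k U s = foldr (\<lambda>j M. ((1/2) \<cdot>\<^sub>m (1\<^sub>m (2^n) + (if s ! (j - 1) then -1 else 1) \<cdot>\<^sub>m gen n k U j)) * M)
      [1..<n-k+1] (1\<^sub>m (2^n))"

text \<open>The set T of syndrome representatives, given by a selection function s \<mapsto> E_s.\<close>
definition syndrome_reps :: "nat \<Rightarrow> nat \<Rightarrow> complex mat \<Rightarrow> (bool list \<Rightarrow> pauli list) \<Rightarrow> bool" where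
  "syndrome_reps n k U Es \<longleftrightarrow>
     (\<forall>s\<in>syndromes (n-k). Es s \<in> paulis n \<and> syndrome n k U (Es s) = s) \<and>
     Es (replicate (n-k) False) = replicate n PI"

definition rep_set :: "nat \<Rightarrow> (bool list \<Rightarrow> pauli list) \<Rightarrow> pauli list set" where
  "rep_set m Es = Es ` syndromes m"

definition TS_set :: "nat \<Rightarrow> nat \<Rightarrow> complex mat \<Rightarrow> (bool list \<Rightarrow> pauli list) \<Rightarrow> pauli list set" where
  "TS_set n k U Es = {Q \<in> paulis n. \<exists>h\<in>rep_set (n-k) Es. \<exists>g\<in>stabilizer n k U. \<exists>c.
       c \<noteq> 0 \<and> pmat h * g = c \<cdot>\<^sub>m pmat Q}"

fun zero_proj :: "nat \<Rightarrow> complex mat" where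
  "zero_proj 0 = 1\<^sub>m 1"
| "zero_proj (Suc m) = kron (ebasis 2 0 0) (zero_proj m)"

definition encode :: "nat \<Rightarrow> nat \<Rightarrow> complex mat \<Rightarrow> complex mat \<Rightarrow> complex mat" where
  "encode n k U \<rho> = U * kron \<rho> (zero_proj (n-k)) * adj U"

definition decode :: "nat \<Rightarrow> nat \<Rightarrow> complex mat \<Rightarrow> (bool list \<Rightarrow> pauli list) \<Rightarrow> complex mat \<Rightarrow> complex mat" where
  "decode n k U Es \<rho>' = ptrace2 (2^k) (2^(n-k))
     (msum (2^n) (\<lambda>s. adj U * pmat (Es s) * proj n k U s * \<rho>' * proj n k U s * adj (pmat (Es s)) * U)
        (syndromes (n-k)))"

definition depol1 :: "real \<Rightarrow> complex mat \<Rightarrow> complex mat" where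
  "depol1 p \<rho> = complex_of_real (1 - 3/4 * p) \<cdot>\<^sub>m \<rho> +
     complex_of_real (p/4) \<cdot>\<^sub>m (pauli_mat PX * \<rho> * pauli_mat PX + pauli_mat PY * \<rho> * pauli_mat PY
        + pauli_mat PZ * \<rho> * pauli_mat PZ)"

fun depol :: "nat \<Rightarrow> real \<Rightarrow> complex mat \<Rightarrow> complex mat" where
  "depol 0 p = (\<lambda>\<rho>. \<rho>)"
| "depol (Suc n) p = superop_tensor 2 (2^n) (depol1 p) (depol n p)"

definition perr :: "real \<Rightarrow> pauli list \<Rightarrow> real" where
  "perr p E = (\<Prod>a\<leftarrow>E. if a = PI then 1 - 3/4 * p else p/4)"

end

theory Submission
  imports Defs
begin

lemma mult_entry:
  assumes "A \<in> carrier_mat n m" "B \<in> carrier_mat m l" "i < n" "j < l"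
  shows "(A*B)$$(i,j) = (\<Sum>u<m. A$$(i,u) * B$$(u,j))"
  using assms by (auto simp: scalar_prod_def atLeast0LessThan intro!: sum.cong)

lemma sum_split_mult: "(\<Sum>u<a*b. f u) = (\<Sum>i<a. \<Sum>k<b. f (i*b+k::nat))"
proof (induction a)
  case 0 then show ?case by simp
next
  case (Suc a)
  have "(\<Sum>u<Suc a*b. f u) = (\<Sum>u<a*b. f u) + (\<Sum>u\<in>{a*b..<a*b+b}. f u)"
    by (simp add: sum.atLeastLessThan_concat[symmetric] lessThan_atLeast0 add.commute)
  also have "(\<Sum>u\<in>{a*b..<a*b+b}. f u) = (\<Sum>k<b. f (a*b+k))"
    using sum.shift_bounds_nat_ivl[of f 0 "a*b" b] by (simp add: lessThan_atLeast0 add.commute)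
  finally show ?case using Suc by simp
qed

lemma kron_carrier[simp]: "kron A B \<in> carrier_mat (dim_row A * dim_row B) (dim_col A * dim_col B)"
  by (simp add: kron_def)

lemma kron_dims[simp]: "dim_row (kron A B) = dim_row A * dim_row B" "dim_col (kron A B) = dim_col A * dim_col B"
  by (simp_all add: kron_def)

lemma kron_index[simp]: "i < dim_row A * dim_row B \<Longrightarrow> j < dim_col A * dim_col B \<Longrightarrow>
   kron A B $$ (i,j) = A $$ (i div dim_row B, j div dim_col B) * B $$ (i mod dim_row B, j mod dim_col B)"
  by (simp add: kron_def)

lemma divmod_lt: "i < (a::nat) \<Longrightarrow> k < b \<Longrightarrow> (i*b+k) div b = i \<and> (i*b+k) mod b = k \<and> i*b+k < a*b"
proof -
  assume h: "i < a" "k < b"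
  have "i*b+k < i*b + b" using h by simp
  also have "\<dots> = Suc i * b" by simp
  also have "\<dots> \<le> a*b" using h by (intro mult_le_mono1) simp
  finally show ?thesis using h by simp
qed

lemma kron_mult:
  assumes "A \<in> carrier_mat a a'" "C \<in> carrier_mat a' a''" "B \<in> carrier_mat b b'" "D \<in> carrier_mat b' b''"
  shows "kron A B * kron C D = kron (A*C) (B*D)"
proof (rule eq_matI)
  fix i j assume i: "i < dim_row (kron (A*C) (B*D))" and j: "j < dim_col (kron (A*C) (B*D))"
  have i': "i < a*b" and j': "j < a''*b''" using i j assms by auto
  have bpos: "b > 0" "b'' > 0" using i' j' by (auto intro!: gr0I)
  have idv: "i div b < a" "i mod b < b" using i' bpos by (auto simp: less_mult_imp_div_less)
  have jdv: "j div b'' < a''" "j mod b'' < b''" using j' bpos by (auto simp: less_mult_imp_div_less)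
  have "(kron A B * kron C D) $$ (i,j) = (\<Sum>u<a'*b'. kron A B $$ (i,u) * kron C D $$ (u,j))"
    by (rule mult_entry[of _ "a*b" "a'*b'" _ "a''*b''"]) (use assms i' j' in auto)
  also have "\<dots> = (\<Sum>x<a'. \<Sum>y<b'. kron A B $$ (i,x*b'+y) * kron C D $$ (x*b'+y,j))"
    by (rule sum_split_mult)
  also have "\<dots> = (\<Sum>x<a'. \<Sum>y<b'. (A$$(i div b, x) * C$$(x, j div b'')) * (B$$(i mod b, y) * D$$(y, j mod b'')))"
    using assms i' j' divmod_lt by (intro sum.cong refl) (auto simp: divmod_lt)
  also have "\<dots> = (\<Sum>x<a'. A$$(i div b, x) * C$$(x, j div b'')) * (\<Sum>y<b'. B$$(i mod b, y) * D$$(y, j mod b''))"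
    by (simp add: sum_product)
  also have "\<dots> = (A*C)$$(i div b, j div b'') * (B*D)$$(i mod b, j mod b'')"
    by (simp only: mult_entry[OF assms(1,2) idv(1) jdv(1)] mult_entry[OF assms(3,4) idv(2) jdv(2)])
  also have "\<dots> = kron (A*C) (B*D) $$ (i,j)"
    using assms i' j' by simp
  finally show "(kron A B * kron C D) $$ (i,j) = kron (A*C) (B*D) $$ (i,j)" .
qed (use assms in auto)

lemma divmod_bound: "(i::nat) < a*b \<Longrightarrow> i div b < a \<and> i mod b < b"
  by (metis less_mult_imp_div_less mod_less_divisor mult.commute mult_0_right not_less_zero gr0I)

lemma kron_smult_left: "kron (c \<cdot>\<^sub>m A) B = c \<cdot>\<^sub>m kron A B"
  by (rule eq_matI) (auto simp: kron_def dest!: divmod_bound)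
lemma kron_smult_right: "kron A (c \<cdot>\<^sub>m B) = c \<cdot>\<^sub>m kron A B"
  by (rule eq_matI) (auto simp: kron_def dest!: divmod_bound)

lemma idx_eq_divmod: "((i::nat) = j) = (i div b = j div b \<and> i mod b = j mod b)"
  by (metis div_mult_mod_eq)

lemma kron_one: "kron (1\<^sub>m a) (1\<^sub>m b) = 1\<^sub>m (a*b)"
proof (rule eq_matI)
  fix i j assume "i < dim_row (1\<^sub>m (a*b))" "j < dim_col (1\<^sub>m (a*b))"
  then have h: "i < a*b" "j < a*b" by auto
  then have b: "b > 0" by (auto intro!: gr0I)
  have "i div b < a" "j div b < a" using h by (auto simp: less_mult_imp_div_less)
  moreover have "i mod b < b" "j mod b < b" using b by auto
  ultimately show "kron (1\<^sub>m a) (1\<^sub>m b) $$ (i,j) = 1\<^sub>m (a*b) $$ (i,j)"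
    using h idx_eq_divmod[of i j b] by auto
qed auto

lemma kron_one1_left: "kron (1\<^sub>m 1) A = A"
  by (rule eq_matI) (auto simp: kron_def)
lemma kron_one1_right: "kron A (1\<^sub>m 1) = A"
  by (rule eq_matI) (auto simp: kron_def)

lemma divmod_assoc:
  assumes "(c::nat) > 0"
  shows "i div c div b = i div (b*c)" "i mod (b*c) div c = i div c mod b" "i mod (b*c) mod c = i mod c"
proof -
  show "i div c div b = i div (b*c)" by (metis div_mult2_eq mult.commute)
  have e: "i mod (b*c) = c * (i div c mod b) + i mod c" by (metis mod_mult2_eq mult.commute)
  show "i mod (b*c) div c = i div c mod b" unfolding e using assms by simp
  show "i mod (b*c) mod c = i mod c" unfolding e using assms by simp
qed

lemma kron_assoc: "kron (kron A B) C = kron A (kron B C)"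
proof (rule eq_matI)
  fix i j assume "i < dim_row (kron A (kron B C))" "j < dim_col (kron A (kron B C))"
  then have h: "i < dim_row A * (dim_row B * dim_row C)" "j < dim_col A * (dim_col B * dim_col C)" by auto
  then have p: "dim_row B > 0" "dim_row C > 0" "dim_col B > 0" "dim_col C > 0" by (auto intro!: gr0I)
  have h': "i < dim_row A * dim_row B * dim_row C" "j < dim_col A * dim_col B * dim_col C"
    using h by (simp_all add: mult.assoc)
  have a1: "i div dim_row C < dim_row A * dim_row B" using h'
    by (simp add: less_mult_imp_div_less)
  have a2: "j div dim_col C < dim_col A * dim_col B" using h'
    by (simp add: less_mult_imp_div_less)
  have b1: "i mod (dim_row B * dim_row C) < dim_row B * dim_row C" using p by simp
  have b2: "j mod (dim_col B * dim_col C) < dim_col B * dim_col C" using p by simp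
  have "kron (kron A B) C $$ (i,j) = A $$ (i div dim_row C div dim_row B, j div dim_col C div dim_col B)
     * B $$ (i div dim_row C mod dim_row B, j div dim_col C mod dim_col B) * C $$ (i mod dim_row C, j mod dim_col C)"
    using h' a1 a2 by (simp only: kron_index kron_dims)
  also have "\<dots> = A $$ (i div (dim_row B * dim_row C), j div (dim_col B * dim_col C))
     * (B $$ (i mod (dim_row B * dim_row C) div dim_row C, j mod (dim_col B * dim_col C) div dim_col C)
      * C $$ (i mod (dim_row B * dim_row C) mod dim_row C, j mod (dim_col B * dim_col C) mod dim_col C))"
    using p by (simp only: divmod_assoc mult.assoc)
  also have "\<dots> = kron A (kron B C) $$ (i,j)"
    using h b1 b2 by (simp only: kron_index kron_dims)
  finally show "kron (kron A B) C $$ (i,j) = kron A (kron B C) $$ (i,j)" .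
qed auto

section \<open>adjoint\<close>

lemma adj_carrier[simp]: "A \<in> carrier_mat n m \<Longrightarrow> adj A \<in> carrier_mat m n"
  by (auto simp: adj_def)
lemma adj_dims[simp]: "dim_row (adj A) = dim_col A" "dim_col (adj A) = dim_row A"
  by (auto simp: adj_def)
lemma adj_index[simp]: "i < dim_col A \<Longrightarrow> j < dim_row A \<Longrightarrow> adj A $$ (i,j) = cnj (A $$ (j,i))"
  by (auto simp: adj_def)
lemma adj_adj[simp]: "adj (adj A) = A"
  by (rule eq_matI) auto
lemma adj_one[simp]: "adj (1\<^sub>m n) = 1\<^sub>m n"
  by (rule eq_matI) auto
lemma adj_smult: "adj (c \<cdot>\<^sub>m A) = cnj c \<cdot>\<^sub>m adj A"
  by (rule eq_matI) auto
lemma adj_add: "A \<in> carrier_mat n m \<Longrightarrow> B \<in> carrier_mat n m \<Longrightarrow> adj (A + B) = adj A + adj B"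
  by (rule eq_matI) auto
lemma adj_mult: assumes "A \<in> carrier_mat n m" "B \<in> carrier_mat m l"
  shows "adj (A*B) = adj B * adj A"
proof (rule eq_matI)
  fix i j assume "i < dim_row (adj B * adj A)" "j < dim_col (adj B * adj A)"
  then have h: "i < l" "j < n" using assms by auto
  have "adj (A*B) $$ (i,j) = cnj ((A*B)$$(j,i))" using assms h by simp
  also have "\<dots> = cnj (\<Sum>u<m. A$$(j,u)*B$$(u,i))" by (simp only: mult_entry[OF assms h(2) h(1)])
  also have "\<dots> = (\<Sum>u<m. adj B $$(i,u) * adj A $$ (u,j))" using assms h by (simp add: mult.commute)
  also have "\<dots> = (adj B * adj A)$$(i,j)" by (rule mult_entry[symmetric]) (use assms h in auto)
  finally show "adj (A*B) $$ (i,j) = (adj B * adj A) $$ (i,j)" .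
qed (use assms in auto)
lemma adj_kron: "adj (kron A B) = kron (adj A) (adj B)"
  by (rule eq_matI) (auto simp: kron_def adj_def dest!: divmod_bound)

section \<open>Single-qubit Paulis\<close>

fun pm :: "pauli \<Rightarrow> pauli \<Rightarrow> pauli" where
  "pm PI b = b"
| "pm a PI = a"
| "pm PX PX = PI" | "pm PX PY = PZ" | "pm PX PZ = PY"
| "pm PY PX = PZ" | "pm PY PY = PI" | "pm PY PZ = PX"
| "pm PZ PX = PY" | "pm PZ PY = PX" | "pm PZ PZ = PI"

fun ph :: "pauli \<Rightarrow> pauli \<Rightarrow> complex" where
  "ph PX PY = \<i>" | "ph PY PX = -\<i>" | "ph PY PZ = \<i>" | "ph PZ PY = -\<i>"
| "ph PZ PX = \<i>" | "ph PX PZ = -\<i>" | "ph _ _ = 1"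

definition eps :: "pauli \<Rightarrow> pauli \<Rightarrow> complex" where
  "eps a b = (if a = PI \<or> b = PI \<or> a = b then 1 else -1)"

lemma pauli_carrier[simp]: "pauli_mat a \<in> carrier_mat 2 2"
  by (cases a) (auto simp: pauli_mat_def mat_of_rows_list_def)
lemma pauli_dims[simp]: "dim_row (pauli_mat a) = 2" "dim_col (pauli_mat a) = 2"
  by (cases a; simp add: pauli_mat_def mat_of_rows_list_def)+

lemma less2: "(i::nat) < 2 \<longleftrightarrow> i = 0 \<or> i = 1" by auto

lemma mult2_entry: "A \<in> carrier_mat 2 2 \<Longrightarrow> B \<in> carrier_mat 2 2 \<Longrightarrow> i < 2 \<Longrightarrow> j < 2 \<Longrightarrow>
  (A*B)$$(i,j) = A$$(i,0)*B$$(0,j) + A$$(i,1)*B$$(1,j)"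
  by (subst mult_entry[of _ 2 2 _ 2]) (auto simp: numeral_2_eq_2)

lemma pauli_entries:
  "pauli_mat PI $$ (0,0) = 1" "pauli_mat PI $$ (0,1) = 0" "pauli_mat PI $$ (1,0) = 0" "pauli_mat PI $$ (1,1) = 1"
  "pauli_mat PX $$ (0,0) = 0" "pauli_mat PX $$ (0,1) = 1" "pauli_mat PX $$ (1,0) = 1" "pauli_mat PX $$ (1,1) = 0"
  "pauli_mat PY $$ (0,0) = 0" "pauli_mat PY $$ (0,1) = -\<i>" "pauli_mat PY $$ (1,0) = \<i>" "pauli_mat PY $$ (1,1) = 0"
  "pauli_mat PZ $$ (0,0) = 1" "pauli_mat PZ $$ (0,1) = 0" "pauli_mat PZ $$ (1,0) = 0" "pauli_mat PZ $$ (1,1) = -1"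
  by (simp_all add: pauli_mat_def mat_of_rows_list_def)

lemma pauli_entries_Suc:
  "pauli_mat PI $$ (0,0) = 1" "pauli_mat PI $$ (0,Suc 0) = 0" "pauli_mat PI $$ (Suc 0,0) = 0" "pauli_mat PI $$ (Suc 0,Suc 0) = 1"
  "pauli_mat PX $$ (0,0) = 0" "pauli_mat PX $$ (0,Suc 0) = 1" "pauli_mat PX $$ (Suc 0,0) = 1" "pauli_mat PX $$ (Suc 0,Suc 0) = 0"
  "pauli_mat PY $$ (0,0) = 0" "pauli_mat PY $$ (0,Suc 0) = -\<i>" "pauli_mat PY $$ (Suc 0,0) = \<i>" "pauli_mat PY $$ (Suc 0,Suc 0) = 0"
  "pauli_mat PZ $$ (0,0) = 1" "pauli_mat PZ $$ (0,Suc 0) = 0" "pauli_mat PZ $$ (Suc 0,0) = 0" "pauli_mat PZ $$ (Suc 0,Suc 0) = -1"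
  by (simp_all add: pauli_mat_def mat_of_rows_list_def)

lemma pauli_mult: "pauli_mat a * pauli_mat b = ph a b \<cdot>\<^sub>m pauli_mat (pm a b)"
proof (rule eq_matI)
  fix i j assume "i < dim_row (ph a b \<cdot>\<^sub>m pauli_mat (pm a b))" "j < dim_col (ph a b \<cdot>\<^sub>m pauli_mat (pm a b))"
  then have ij: "i < 2" "j < 2" by auto
  have e: "(pauli_mat a * pauli_mat b)$$(i,j) = pauli_mat a$$(i,0)*pauli_mat b$$(0,j) + pauli_mat a$$(i,1)*pauli_mat b$$(1,j)"
    by (rule mult2_entry) (use ij in auto)
  show "(pauli_mat a * pauli_mat b) $$ (i,j) = (ph a b \<cdot>\<^sub>m pauli_mat (pm a b)) $$ (i,j)"
    unfolding e using ij by (auto simp: less2, (cases a; cases b; simp add: pauli_entries pauli_entries_Suc)+)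
qed auto

lemma pauli_comm: "pauli_mat a * pauli_mat b = eps a b \<cdot>\<^sub>m (pauli_mat b * pauli_mat a)"
proof (rule eq_matI)
  fix i j assume "i < dim_row (eps a b \<cdot>\<^sub>m (pauli_mat b * pauli_mat a))" "j < dim_col (eps a b \<cdot>\<^sub>m (pauli_mat b * pauli_mat a))"
  then have ij: "i < 2" "j < 2" by auto
  have e: "(pauli_mat a * pauli_mat b)$$(i,j) = pauli_mat a$$(i,0)*pauli_mat b$$(0,j) + pauli_mat a$$(i,1)*pauli_mat b$$(1,j)"
    by (rule mult2_entry) (use ij in auto)
  have e2: "(pauli_mat b * pauli_mat a)$$(i,j) = pauli_mat b$$(i,0)*pauli_mat a$$(0,j) + pauli_mat b$$(i,1)*pauli_mat a$$(1,j)"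
    by (rule mult2_entry) (use ij in auto)
  have e3: "(eps a b \<cdot>\<^sub>m (pauli_mat b * pauli_mat a)) $$ (i,j) = eps a b * (pauli_mat b * pauli_mat a)$$(i,j)"
    using ij by simp
  show "(pauli_mat a * pauli_mat b) $$ (i,j) = (eps a b \<cdot>\<^sub>m (pauli_mat b * pauli_mat a)) $$ (i,j)"
    unfolding e e3 e2 using ij by (auto simp: less2, (cases a; cases b; simp add: pauli_entries pauli_entries_Suc eps_def)+)
qed auto

lemma pauli_I: "pauli_mat PI = 1\<^sub>m 2"
  by (rule eq_matI) (auto simp: less2 pauli_mat_def mat_of_rows_list_def)

lemma pauli_adj: "adj (pauli_mat a) = pauli_mat a"
  by (rule eq_matI) (auto simp: less2, (cases a; auto simp: pauli_entries pauli_entries_Suc)+)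

lemma pauli_trace: "pauli_mat a $$ (0,0) + pauli_mat a $$ (1,1) = (if a = PI then 2 else 0)"
  by (cases a) (auto simp: pauli_mat_def mat_of_rows_list_def)

lemma pm_eq_I: "pm a b = PI \<longleftrightarrow> a = b"
  by (cases a; cases b) auto

lemma pm_comm: "pm a b = pm b a"
  by (cases a; cases b) auto

lemma ph_norm: "cmod (ph a b) = 1"
  by (cases a; cases b) auto

lemma eps_pm: "eps a b = 1 \<or> eps a b = -1"
  by (auto simp: eps_def)

lemma smult_smult_m: "a \<cdot>\<^sub>m (b \<cdot>\<^sub>m A) = (a*b::complex) \<cdot>\<^sub>m A"
  by (rule eq_matI) auto
lemma one_smult_m[simp]: "(1::complex) \<cdot>\<^sub>m A = A"
  by (rule eq_matI) auto

section \<open>Multi-qubit Paulis\<close>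

lemma pmat_carrier[simp]: "pmat P \<in> carrier_mat (2^length P) (2^length P)"
  by (induction P) (auto simp: pauli_dims)
lemma pmat_dims[simp]: "dim_row (pmat P) = 2^length P" "dim_col (pmat P) = 2^length P"
  using pmat_carrier[of P] by (auto dest: carrier_matD simp del: pmat_carrier)

definition pprod :: "pauli list \<Rightarrow> pauli list \<Rightarrow> complex" where
  "pprod P Q = prod_list (map2 ph P Q)"
definition peps :: "pauli list \<Rightarrow> pauli list \<Rightarrow> complex" where
  "peps P Q = prod_list (map2 eps P Q)"
definition pmul :: "pauli list \<Rightarrow> pauli list \<Rightarrow> pauli list" where
  "pmul P Q = map2 pm P Q"

lemma pmul_Cons[simp]: "pmul (a#P) (b#Q) = pm a b # pmul P Q" by (simp add: pmul_def)
lemma pprod_Cons[simp]: "pprod (a#P) (b#Q) = ph a b * pprod P Q" by (simp add: pprod_def)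
lemma peps_Cons[simp]: "peps (a#P) (b#Q) = eps a b * peps P Q" by (simp add: peps_def)
lemma pmul_Nil[simp]: "pmul [] [] = []" "pprod [] [] = 1" "peps [] [] = 1"
  by (simp_all add: pmul_def pprod_def peps_def)
lemma length_pmul[simp]: "length (pmul P Q) = min (length P) (length Q)"
  by (simp add: pmul_def)

lemma pmat_mult: "length P = length Q \<Longrightarrow> pmat P * pmat Q = pprod P Q \<cdot>\<^sub>m pmat (pmul P Q)"
proof (induction P Q rule: list_induct2)
  case Nil then show ?case by simp
next
  case (Cons a P b Q)
  have "pmat (a#P) * pmat (b#Q) = kron (pauli_mat a * pauli_mat b) (pmat P * pmat Q)"
    by (simp, rule kron_mult) (use Cons in auto)
  also have "\<dots> = (ph a b * pprod P Q) \<cdot>\<^sub>m pmat (pmul (a#P) (b#Q))"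
    by (simp add: Cons pauli_mult kron_smult_left kron_smult_right smult_smult_m mult.commute)
  finally show ?case by simp
qed

lemma pmat_comm: "length P = length Q \<Longrightarrow> pmat P * pmat Q = peps P Q \<cdot>\<^sub>m (pmat Q * pmat P)"
proof (induction P Q rule: list_induct2)
  case Nil then show ?case by simp
next
  case (Cons a P b Q)
  have "pmat (a#P) * pmat (b#Q) = kron (pauli_mat a * pauli_mat b) (pmat P * pmat Q)"
    by (simp, rule kron_mult) (use Cons in auto)
  also have "\<dots> = (eps a b * peps P Q) \<cdot>\<^sub>m kron (pauli_mat b * pauli_mat a) (pmat Q * pmat P)"
    by (simp add: Cons pauli_comm[of a b] kron_smult_left kron_smult_right smult_smult_m mult.commute)
  also have "kron (pauli_mat b * pauli_mat a) (pmat Q * pmat P) = pmat (b#Q) * pmat (a#P)"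
    by (simp, rule kron_mult[symmetric]) (use Cons in auto)
  finally show ?case by simp
qed

lemma peps_pm: "peps P Q = 1 \<or> peps P Q = -1"
  unfolding peps_def
proof (induction "map2 eps P Q" arbitrary: P Q)
  case Nil then show ?case by (simp add: Nil[symmetric])
next
  case (Cons x xs)
  then obtain a P' b Q' where PQ: "P = a#P'" "Q = b#Q'" "x = eps a b" "xs = map2 eps P' Q'"
    by (cases P; cases Q) auto
  then show ?case using Cons(1)[of P' Q'] eps_pm[of a b] by (auto simp: PQ)
qed

lemma pprod_norm: "cmod (pprod P Q) = 1"
  unfolding pprod_def
proof (induction "map2 ph P Q" arbitrary: P Q)
  case Nil then show ?case by (simp add: Nil[symmetric])
next
  case (Cons x xs)
  then obtain a P' b Q' where PQ: "P = a#P'" "Q = b#Q'" "x = ph a b" "xs = map2 ph P' Q'"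
    by (cases P; cases Q) auto
  then show ?case using Cons(1)[of P' Q'] ph_norm[of a b] by (auto simp: PQ norm_mult)
qed

lemma pmat_rep_I: "pmat (replicate k PI) = 1\<^sub>m (2^k)"
  by (induction k) (auto simp: pauli_I kron_one)

lemma pmat_adj: "adj (pmat P) = pmat P"
  by (induction P) (auto simp: adj_kron pauli_adj)

lemma pmul_self: "pmul P P = replicate (length P) PI"
  by (induction P) (auto simp: pm_eq_I)
lemma pprod_self: "pprod P P = 1"
proof (induction P)
  case (Cons a P) then show ?case by (cases a) auto
qed simp

lemma pmat_sq: "pmat P * pmat P = 1\<^sub>m (2^length P)"
  by (simp add: pmat_mult pmul_self pprod_self pmat_rep_I)

lemma pmat_append: "pmat (xs @ ys) = kron (pmat xs) (pmat ys)"
  by (induction xs) (auto simp: kron_one1_left kron_assoc)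

lemma trace_kron:
  assumes "A \<in> carrier_mat a a" "B \<in> carrier_mat b b"
  shows "(\<Sum>i<a*b. kron A B $$ (i,i)) = (\<Sum>i<a. A$$(i,i)) * (\<Sum>i<b. B$$(i,i))"
proof -
  have "(\<Sum>i<a*b. kron A B $$ (i,i)) = (\<Sum>x<a. \<Sum>y<b. kron A B $$ (x*b+y,x*b+y))"
    by (rule sum_split_mult)
  also have "\<dots> = (\<Sum>x<a. \<Sum>y<b. A$$(x,x) * B$$(y,y))"
    using assms by (intro sum.cong refl) (auto simp: divmod_lt)
  finally show ?thesis by (simp add: sum_product)
qed

lemma pmat_trace: "(\<Sum>i<2^length P. pmat P $$ (i,i)) = (if set P \<subseteq> {PI} then 2^length P else 0)"
proof (induction P)
  case Nil then show ?case by simp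
next
  case (Cons a P)
  have "(\<Sum>i<2^length (a#P). pmat (a#P) $$ (i,i)) = (\<Sum>i<2. pauli_mat a $$(i,i)) * (\<Sum>i<2^length P. pmat P $$ (i,i))"
    using trace_kron[of "pauli_mat a" 2 "pmat P" "2^length P"] by simp
  also have "(\<Sum>i<2. pauli_mat a $$(i,i)) = (if a = PI then 2 else 0)"
    using pauli_trace[of a] by (simp add: numeral_2_eq_2)
  finally show ?case using Cons by auto
qed

lemma pmat_inj:
  assumes "length P = length Q" "c \<cdot>\<^sub>m pmat P = d \<cdot>\<^sub>m pmat Q" "c \<noteq> 0"
  shows "P = Q"
proof (rule ccontr)
  assume ne: "P \<noteq> Q"
  let ?n = "length P"
  have "pmat P * (c \<cdot>\<^sub>m pmat P) = pmat P * (d \<cdot>\<^sub>m pmat Q)" using assms(2) by simp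
  moreover have "pmat P * (c \<cdot>\<^sub>m pmat P) = c \<cdot>\<^sub>m (pmat P * pmat P)"
    by (rule mult_smult_distrib) auto
  moreover have "pmat P * (d \<cdot>\<^sub>m pmat Q) = d \<cdot>\<^sub>m (pmat P * pmat Q)"
    by (rule mult_smult_distrib) (use assms(1) in auto)
  ultimately have "c \<cdot>\<^sub>m 1\<^sub>m (2^?n) = (d * pprod P Q) \<cdot>\<^sub>m pmat (pmul P Q)"
    using assms(1) by (simp add: pmat_sq pmat_mult smult_smult_m)
  then have "(\<Sum>i<2^?n. (c \<cdot>\<^sub>m 1\<^sub>m (2^?n)) $$ (i,i)) = (\<Sum>i<2^?n. ((d * pprod P Q) \<cdot>\<^sub>m pmat (pmul P Q)) $$ (i,i))"
    by simp
  also have "\<dots> = (d * pprod P Q) * (\<Sum>i<2^length (pmul P Q). pmat (pmul P Q) $$ (i,i))"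
    using assms(1) by (simp add: sum_distrib_left)
  also have "\<dots> = 0"
  proof -
    have "\<not> set (pmul P Q) \<subseteq> {PI}"
    proof
      assume "set (pmul P Q) \<subseteq> {PI}"
      then have "\<forall>i<length P. pm (P!i) (Q!i) = PI" using assms(1)
        by (auto simp: pmul_def set_conv_nth)
      then have "\<forall>i<length P. P!i = Q!i" by (simp add: pm_eq_I)
      then show False using ne assms(1) nth_equalityI by blast
    qed
    then show ?thesis by (simp only: pmat_trace) simp
  qed
  finally have "c * 2^?n = 0" by simp
  then show False using assms(3) by simp
qed

lemma pmat_IZ_col: "set Q \<subseteq> {PI,PZ} \<Longrightarrow> r < 2^length Q \<Longrightarrow> pmat Q $$ (r,0) = (if r = 0 then 1 else 0)"
proof (induction Q arbitrary: r)
  case Nil then show ?case by simp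
next
  case (Cons a Q)
  let ?d = "2^length Q :: nat"
  have r: "r div ?d < 2" "r mod ?d < ?d" using Cons.prems by (auto simp: less_mult_imp_div_less mult.commute)
  have "pmat (a#Q) $$ (r,0) = pauli_mat a $$ (r div ?d, 0) * pmat Q $$ (r mod ?d, 0)"
    using Cons.prems by simp
  also have "\<dots> = (if r div ?d = 0 then 1 else 0) * (if r mod ?d = 0 then 1 else 0)"
    using Cons r by (auto simp: less2 pauli_entries pauli_entries_Suc)
  also have "\<dots> = (if r = 0 then 1 else 0)"
    using idx_eq_divmod[of r 0 ?d] by auto
  finally show ?case .
qed

lemma pmat_col_norm: "(\<Sum>l<2^length Q. pmat Q $$ (l,0) * cnj (pmat Q $$ (l,0))) = 1"
proof -
  have "(adj (pmat Q) * pmat Q) $$ (0,0) = 1"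
    by (simp add: pmat_adj pmat_sq)
  moreover have "(adj (pmat Q) * pmat Q) $$ (0,0) = (\<Sum>l<2^length Q. adj (pmat Q) $$ (0,l) * pmat Q $$ (l,0))"
    by (rule mult_entry) auto
  ultimately show ?thesis by (simp add: mult.commute)
qed

lemma msum_carrier[simp]: "msum d f S \<in> carrier_mat d d"
  by (simp add: msum_def)
lemma msum_dims[simp]: "dim_row (msum d f S) = d" "dim_col (msum d f S) = d"
  by (simp_all add: msum_def)
lemma msum_index[simp]: "i < d \<Longrightarrow> j < d \<Longrightarrow> msum d f S $$ (i,j) = (\<Sum>x\<in>S. f x $$ (i,j))"
  by (simp add: msum_def)

lemma ebasis_carrier[simp]: "ebasis d i j \<in> carrier_mat d d"
  by (simp add: ebasis_def)

lemma mult_ebasis_right: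
  assumes "A \<in> carrier_mat n d" "i < d" "j < d" "x < n" "v < d"
  shows "(A * ebasis d i j)$$(x,v) = (if v = j then A$$(x,i) else 0)"
proof -
  have "(A * ebasis d i j)$$(x,v) = (\<Sum>u<d. A$$(x,u) * ebasis d i j $$ (u,v))"
    by (rule mult_entry) (use assms in auto)
  also have "\<dots> = (\<Sum>u<d. if u = i then (if v = j then A$$(x,i) else 0) else 0)"
    using assms by (intro sum.cong) (auto simp: ebasis_def)
  finally show ?thesis using assms by simp
qed

lemma sandwich_ebasis:
  assumes "A \<in> carrier_mat n d" "A' \<in> carrier_mat d m" "i < d" "j < d" "x < n" "y < m"
  shows "(A * ebasis d i j * A') $$ (x,y) = A$$(x,i) * A'$$(j,y)"
proof -
  have "(A * ebasis d i j * A') $$ (x,y) = (\<Sum>v<d. (A * ebasis d i j)$$(x,v) * A'$$(v,y))"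
    by (rule mult_entry) (use assms in auto)
  also have "\<dots> = (\<Sum>v<d. if v = j then A$$(x,i) * A'$$(j,y) else 0)"
    using assms by (intro sum.cong) (auto simp: mult_ebasis_right)
  finally show ?thesis using assms by simp
qed

lemma smult_sandwich_ebasis:
  assumes "A \<in> carrier_mat n d" "A' \<in> carrier_mat d m" "i < d" "j < d" "x < n" "y < m"
  shows "(c \<cdot>\<^sub>m (A * ebasis d i j * A')) $$ (x,y) = c * (A$$(x,i) * A'$$(j,y))"
proof -
  have "dim_row (A * ebasis d i j * A') = n" "dim_col (A * ebasis d i j * A') = m" using assms by auto
  then show ?thesis using assms sandwich_ebasis[OF assms] by (simp del: index_mult_mat)
qed

lemma sum_pair: "(\<Sum>x\<in>A\<times>B. h x) = (\<Sum>a\<in>A. \<Sum>b\<in>B. h (a,b))"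
  by (simp add: sum.cartesian_product split_def)

lemma triple_entry:
  assumes "A \<in> carrier_mat n d" "M \<in> carrier_mat d d" "A' \<in> carrier_mat d m" "x < n" "y < m"
  shows "(A * M * A') $$ (x,y) = (\<Sum>u<d. \<Sum>v<d. A$$(x,u) * M$$(u,v) * A'$$(v,y))"
proof -
  have "(A * M * A') $$ (x,y) = (\<Sum>v<d. (A * M)$$(x,v) * A'$$(v,y))"
    by (rule mult_entry) (use assms in auto)
  also have "\<dots> = (\<Sum>v<d. (\<Sum>u<d. A$$(x,u) * M$$(u,v)) * A'$$(v,y))"
    using assms by (intro sum.cong refl) (subst mult_entry[of _ n d _ d], auto)
  also have "\<dots> = (\<Sum>u<d. \<Sum>v<d. A$$(x,u) * M$$(u,v) * A'$$(v,y))"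
    by (simp add: sum_distrib_right) (rule sum.swap)
  finally show ?thesis .
qed

lemma kron_index_col:
  assumes "A \<in> carrier_mat a a'" "B \<in> carrier_mat b b'" "r < a*b" "i < a'" "k < b'"
  shows "kron A B $$ (r, i*b'+k) = A$$(r div b, i) * B$$(r mod b, k)"
  using assms divmod_lt[OF assms(4,5)] by simp

lemma kron_index_row:
  assumes "A \<in> carrier_mat a a'" "B \<in> carrier_mat b b'" "s < a'*b'" "i < a" "k < b"
  shows "kron A B $$ (i*b+k, s) = A$$(i, s div b') * B$$(k, s mod b')"
  using assms divmod_lt[OF assms(4,5)] by simp

lemma superop_tensor_sandwich:
  fixes c d :: "_ \<Rightarrow> complex"
  assumes fin: "finite I" "finite J" and M: "M \<in> carrier_mat (a*b) (a*b)"
    and AA: "\<And>\<alpha>. \<alpha>\<in>I \<Longrightarrow> A \<alpha> \<in> carrier_mat a a \<and> A' \<alpha> \<in> carrier_mat a a"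
    and BB: "\<And>\<beta>. \<beta>\<in>J \<Longrightarrow> B \<beta> \<in> carrier_mat b b \<and> B' \<beta> \<in> carrier_mat b b"
    and Phi: "\<And>X. X\<in>carrier_mat a a \<Longrightarrow> \<Phi> X = msum a (\<lambda>\<alpha>. c \<alpha> \<cdot>\<^sub>m (A \<alpha> * X * A' \<alpha>)) I"
    and Psi: "\<And>X. X\<in>carrier_mat b b \<Longrightarrow> \<Psi> X = msum b (\<lambda>\<beta>. d \<beta> \<cdot>\<^sub>m (B \<beta> * X * B' \<beta>)) J"
  shows "superop_tensor a b \<Phi> \<Psi> M = msum (a*b) (\<lambda>(\<alpha>,\<beta>). (c \<alpha> * d \<beta>) \<cdot>\<^sub>m (kron (A \<alpha>) (B \<beta>) * M * kron (A' \<alpha>) (B' \<beta>))) (I \<times> J)"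
proof (rule eq_matI)
  fix r s assume "r < dim_row (msum (a*b) (\<lambda>(\<alpha>,\<beta>). (c \<alpha> * d \<beta>) \<cdot>\<^sub>m (kron (A \<alpha>) (B \<beta>) * M * kron (A' \<alpha>) (B' \<beta>))) (I \<times> J))"
    "s < dim_col (msum (a*b) (\<lambda>(\<alpha>,\<beta>). (c \<alpha> * d \<beta>) \<cdot>\<^sub>m (kron (A \<alpha>) (B \<beta>) * M * kron (A' \<alpha>) (B' \<beta>))) (I \<times> J))"
  then have rs: "r < a*b" "s < a*b" by auto
  have rd: "r div b < a" "r mod b < b" "s div b < a" "s mod b < b" using rs divmod_bound by auto
  define R r' S s' where "R = r div b" "r' = r mod b" "S = s div b" "s' = s mod b"
  note defs = this
  have PhiE: "\<Phi> (ebasis a i j) $$ (R,S) = (\<Sum>\<alpha>\<in>I. c \<alpha> * (A \<alpha> $$ (R,i) * A' \<alpha> $$ (j,S)))"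
    if "i < a" "j < a" for i j
    using that rd by (simp add: Phi defs, intro sum.cong refl)
      (frule AA, auto simp: smult_sandwich_ebasis[of _ a a _ a])
  have PsiE: "\<Psi> (ebasis b k l) $$ (r',s') = (\<Sum>\<beta>\<in>J. d \<beta> * (B \<beta> $$ (r',k) * B' \<beta> $$ (l,s')))"
    if "k < b" "l < b" for k l
    using that rd by (simp add: Psi defs, intro sum.cong refl)
      (frule BB, auto simp: smult_sandwich_ebasis[of _ b b _ b])
  have dimP: "dim_row (\<Phi> (ebasis a i j)) = a" "dim_col (\<Phi> (ebasis a i j)) = a" for i j
    by (simp_all add: Phi)
  have dimQ: "dim_row (\<Psi> (ebasis b i j)) = b" "dim_col (\<Psi> (ebasis b i j)) = b" for i j
    by (simp_all add: Psi)
  let ?X = "\<lambda>\<alpha> \<beta> i k j l. c \<alpha> * d \<beta> * (A \<alpha> $$ (R,i) * B \<beta> $$ (r',k) * M $$ (i*b+k, j*b+l) * (A' \<alpha> $$ (j,S) * B' \<beta> $$ (l,s')))"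
  have "superop_tensor a b \<Phi> \<Psi> M $$ (r,s)
      = (\<Sum>x\<in>({..<a}\<times>{..<a})\<times>({..<b}\<times>{..<b}). (case x of ((i,j),(k,l)) \<Rightarrow>
           M $$ (i*b+k, j*b+l) * (\<Phi> (ebasis a i j) $$ (R,S) * \<Psi> (ebasis b k l) $$ (r',s'))))"
    unfolding superop_tensor_def using rs
    by (simp add: defs, intro sum.cong refl) (auto simp: dimP dimQ)
  also have "\<dots> = (\<Sum>i<a. \<Sum>j<a. \<Sum>k<b. \<Sum>l<b.
           M $$ (i*b+k, j*b+l) * (\<Phi> (ebasis a i j) $$ (R,S) * \<Psi> (ebasis b k l) $$ (r',s')))"
    by (simp only: sum_pair prod.case)
  also have "\<dots> = (\<Sum>i<a. \<Sum>k<b. \<Sum>j<a. \<Sum>l<b.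
           M $$ (i*b+k, j*b+l) * (\<Phi> (ebasis a i j) $$ (R,S) * \<Psi> (ebasis b k l) $$ (r',s')))"
    by (rule sum.cong[OF refl], rule sum.swap)
  also have "\<dots> = (\<Sum>i<a. \<Sum>k<b. \<Sum>j<a. \<Sum>l<b. \<Sum>p\<in>I\<times>J. ?X (fst p) (snd p) i k j l)"
    by (intro sum.cong refl) (simp add: PhiE PsiE sum_product sum_pair sum_distrib_left mult_ac, rule sum.swap)
  also have "\<dots> = (\<Sum>p\<in>I\<times>J. \<Sum>i<a. \<Sum>k<b. \<Sum>j<a. \<Sum>l<b. ?X (fst p) (snd p) i k j l)"
    by (simp only: sum.swap[where A="I\<times>J"])
  also have "\<dots> = msum (a*b) (\<lambda>(\<alpha>,\<beta>). (c \<alpha> * d \<beta>) \<cdot>\<^sub>m (kron (A \<alpha>) (B \<beta>) * M * kron (A' \<alpha>) (B' \<beta>))) (I \<times> J) $$ (r,s)"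
  proof -
    have "(kron (A \<alpha>) (B \<beta>) * M * kron (A' \<alpha>) (B' \<beta>)) $$ (r,s)
       = (\<Sum>i<a. \<Sum>k<b. \<Sum>j<a. \<Sum>l<b. A \<alpha> $$ (R,i) * B \<beta> $$ (r',k) * M $$ (i*b+k, j*b+l) * (A' \<alpha> $$ (j,S) * B' \<beta> $$ (l,s')))"
      if "\<alpha> \<in> I" "\<beta> \<in> J" for \<alpha> \<beta>
    proof -
      have c1: "kron (A \<alpha>) (B \<beta>) \<in> carrier_mat (a*b) (a*b)" "kron (A' \<alpha>) (B' \<beta>) \<in> carrier_mat (a*b) (a*b)"
        using AA[OF that(1)] BB[OF that(2)] kron_carrier by (metis carrier_matD)+
      have "(kron (A \<alpha>) (B \<beta>) * M * kron (A' \<alpha>) (B' \<beta>)) $$ (r,s)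
          = (\<Sum>u<a*b. \<Sum>v<a*b. kron (A \<alpha>) (B \<beta>) $$ (r,u) * M $$ (u,v) * kron (A' \<alpha>) (B' \<beta>) $$ (v,s))"
        by (rule triple_entry[OF c1(1) M c1(2) rs])
      also have "\<dots> = (\<Sum>i<a. \<Sum>k<b. \<Sum>j<a. \<Sum>l<b. kron (A \<alpha>) (B \<beta>) $$ (r,i*b+k) * M $$ (i*b+k,j*b+l) * kron (A' \<alpha>) (B' \<beta>) $$ (j*b+l,s))"
        by (simp only: sum_split_mult)
      also have "\<dots> = (\<Sum>i<a. \<Sum>k<b. \<Sum>j<a. \<Sum>l<b. A \<alpha> $$ (R,i) * B \<beta> $$ (r',k) * M $$ (i*b+k, j*b+l) * (A' \<alpha> $$ (j,S) * B' \<beta> $$ (l,s')))"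
        using AA[OF that(1)] BB[OF that(2)] rs unfolding defs
        by (intro sum.cong refl) (simp add: kron_index_col[of _ a a _ b b] kron_index_row[of _ a a _ b b])
      finally show ?thesis .
    qed
    moreover have "dim_row (kron (A \<alpha>) (B \<beta>) * M * kron (A' \<alpha>) (B' \<beta>)) = a*b \<and> dim_col (kron (A \<alpha>) (B \<beta>) * M * kron (A' \<alpha>) (B' \<beta>)) = a*b"
      if "\<alpha> \<in> I" "\<beta> \<in> J" for \<alpha> \<beta>
      using AA[OF that(1)] BB[OF that(2)] by (metis carrier_matD index_mult_mat(2,3) kron_dims)
    ultimately have KK: "\<And>p. p \<in> I\<times>J \<Longrightarrow> ((\<lambda>(\<alpha>,\<beta>). (c \<alpha> * d \<beta>) \<cdot>\<^sub>m (kron (A \<alpha>) (B \<beta>) * M * kron (A' \<alpha>) (B' \<beta>))) p) $$ (r,s)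
       = (\<Sum>i<a. \<Sum>k<b. \<Sum>j<a. \<Sum>l<b. ?X (fst p) (snd p) i k j l)"
      using rs by (auto simp: sum_distrib_left mult_ac simp del: index_mult_mat)
    show ?thesis using rs by (simp only: msum_index KK cong: sum.cong)
  qed
  finally show "superop_tensor a b \<Phi> \<Psi> M $$ (r,s) = msum (a*b) (\<lambda>(\<alpha>,\<beta>). (c \<alpha> * d \<beta>) \<cdot>\<^sub>m (kron (A \<alpha>) (B \<beta>) * M * kron (A' \<alpha>) (B' \<beta>))) (I \<times> J) $$ (r,s)" .
qed (auto simp: superop_tensor_def)

lemma UNIV_pauli: "(UNIV :: pauli set) = {PI,PX,PY,PZ}"
  using pauli.exhaust by auto
lemma finite_pauli[simp]: "finite (UNIV :: pauli set)"
  by (simp add: UNIV_pauli)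

lemma paulis_Suc: "paulis (Suc n) = (\<lambda>(a,E). a#E) ` (UNIV \<times> paulis n)"
proof
  show "paulis (Suc n) \<subseteq> (\<lambda>(a,E). a#E) ` (UNIV \<times> paulis n)"
  proof
    fix P assume "P \<in> paulis (Suc n)"
    then obtain a E where "P = a#E" "length E = n" by (cases P) (auto simp: paulis_def)
    then show "P \<in> (\<lambda>(a,E). a#E) ` (UNIV \<times> paulis n)" by (auto simp: paulis_def)
  qed
qed (auto simp: paulis_def)

lemma finite_paulis[simp]: "finite (paulis n)"
  by (induction n) (auto simp: paulis_Suc, simp add: paulis_def)

lemma ebasis_dims[simp]: "dim_row (ebasis d i j) = d" "dim_col (ebasis d i j) = d"
  by (simp_all add: ebasis_def)
lemma ebasis_index[simp]: "r < d \<Longrightarrow> c < d \<Longrightarrow> ebasis d i j $$ (r,c) = (if r = i \<and> c = j then 1 else 0)"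
  by (simp add: ebasis_def)
lemma msum_cong: "(\<And>x. x \<in> S \<Longrightarrow> f x = g x) \<Longrightarrow> msum d f S = msum d g S"
  by (simp add: msum_def)

lemma msum_reindex: "inj_on h S \<Longrightarrow> msum d f (h ` S) = msum d (f \<circ> h) S"
  by (simp add: msum_def sum.reindex)

definition w1 :: "real \<Rightarrow> pauli \<Rightarrow> real" where
  "w1 p a = (if a = PI then 1 - 3/4*p else p/4)"

lemma perr_Cons: "perr p (a#E) = w1 p a * perr p E"
  by (simp add: perr_def w1_def)
lemma perr_Nil: "perr p [] = 1"
  by (simp add: perr_def)

lemma depol1_msum:
  assumes "X \<in> carrier_mat 2 2"
  shows "depol1 p X = msum 2 (\<lambda>a. complex_of_real (w1 p a) \<cdot>\<^sub>m (pauli_mat a * X * pauli_mat a)) UNIV"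
proof (rule eq_matI)
  fix i j assume "i < dim_row (msum 2 (\<lambda>a. complex_of_real (w1 p a) \<cdot>\<^sub>m (pauli_mat a * X * pauli_mat a)) UNIV)"
    "j < dim_col (msum 2 (\<lambda>a. complex_of_real (w1 p a) \<cdot>\<^sub>m (pauli_mat a * X * pauli_mat a)) UNIV)"
  then have ij: "i < 2" "j < 2" by auto
  have d: "\<And>a. pauli_mat a * X * pauli_mat a \<in> carrier_mat 2 2" using assms by auto
  have I: "pauli_mat PI * X * pauli_mat PI = X" using assms by (simp add: pauli_I)
  have D: "dim_row (pauli_mat a * X * pauli_mat a) = 2" "dim_col (pauli_mat a * X * pauli_mat a) = 2" for a
    using assms by auto
  have DX: "dim_row X = 2" "dim_col X = 2" using assms by auto
  show "depol1 p X $$ (i,j) = msum 2 (\<lambda>a. complex_of_real (w1 p a) \<cdot>\<^sub>m (pauli_mat a * X * pauli_mat a)) UNIV $$ (i,j)"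
    using ij unfolding depol1_def
    by (simp add: UNIV_pauli I w1_def distrib_left D DX del: index_mult_mat)
qed (use assms in \<open>auto simp: depol1_def\<close>)

lemma depol_msum:
  "M \<in> carrier_mat (2^n) (2^n) \<Longrightarrow>
   depol n p M = msum (2^n) (\<lambda>E. complex_of_real (perr p E) \<cdot>\<^sub>m (pmat E * M * pmat E)) (paulis n)"
proof (induction n arbitrary: M)
  case 0
  have P0: "paulis 0 = {[]}" by (auto simp: paulis_def)
  show ?case
    by (rule eq_matI) (use 0 in \<open>auto simp: P0 perr_Nil\<close>)
next
  case (Suc n)
  have M: "M \<in> carrier_mat (2 * 2^n) (2 * 2^n)" using Suc.prems by simp
  have "depol (Suc n) p M = superop_tensor 2 (2^n) (depol1 p) (depol n p) M" by simp
  also have "\<dots> = msum (2*2^n) (\<lambda>(a,E). (complex_of_real (w1 p a) * complex_of_real (perr p E)) \<cdot>\<^sub>m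
        (kron (pauli_mat a) (pmat E) * M * kron (pauli_mat a) (pmat E))) (UNIV \<times> paulis n)"
    by (rule superop_tensor_sandwich[OF finite_pauli finite_paulis M])
       (auto simp: depol1_msum Suc.IH paulis_def)
  also have "\<dots> = msum (2^Suc n) (\<lambda>E. complex_of_real (perr p E) \<cdot>\<^sub>m (pmat E * M * pmat E)) (paulis (Suc n))"
  proof -
    have inj: "inj_on (\<lambda>(a,E). a#E) (UNIV \<times> paulis n)" by (auto simp: inj_on_def)
    show ?thesis unfolding paulis_Suc msum_reindex[OF inj]
      by (simp add: comp_def, rule msum_cong) (auto simp: perr_Cons)
  qed
  finally show ?case .
qed

lemma max_ent_idx: "i < m \<Longrightarrow> k < m \<Longrightarrow> max_ent m (i*m+k) = (if i = k then complex_of_real (1/sqrt (real m)) else 0)"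
  using divmod_lt[of i m k m] by (simp add: max_ent_def)

lemma chan_fid_formula:
  assumes m: "m > 0" and C: "\<And>i j. i < m \<Longrightarrow> j < m \<Longrightarrow> Ef (ebasis m i j) \<in> carrier_mat m m"
  shows "chan_fid m Ef = (\<Sum>i<m. \<Sum>j<m. Ef (ebasis m i j) $$ (i,j)) / (of_nat m * of_nat m)"
proof -
  define \<rho> where "\<rho> = mat (m*m) (m*m) (\<lambda>(x,y). max_ent m x * cnj (max_ent m y))"
  define \<sigma> where "\<sigma> = superop_tensor m m (\<lambda>M. M) Ef \<rho>"
  define q where "q = complex_of_real (1/sqrt (real m))"
  have sq: "complex_of_real (sqrt (real m)) * complex_of_real (sqrt (real m)) = of_nat m"
  proof -
    have "sqrt (real m) * sqrt (real m) = real m" by simp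
    then have "complex_of_real (sqrt (real m)) * complex_of_real (sqrt (real m)) = complex_of_real (real m)"
      by (simp only: of_real_mult[symmetric])
    then show ?thesis by simp
  qed
  have qq: "q * cnj q = 1 / of_nat m" using sq by (simp add: q_def)
  have cq: "cnj q = q" by (simp add: q_def)
  have rho: "\<rho> $$ (i*m+k, j*m+l) = (if i = k \<and> j = l then 1 / of_nat m else 0)"
    if "i < m" "k < m" "j < m" "l < m" for i j k l
    using that divmod_lt[of i m k m] divmod_lt[of j m l m]
    by (simp add: \<rho>_def max_ent_idx sq)
  have sig: "\<sigma> $$ (a*m+a, b*m+b) = Ef (ebasis m a b) $$ (a,b) / of_nat m" if "a < m" "b < m" for a b
  proof -
    have dims: "dim_row (Ef (ebasis m k l)) = m" "dim_col (Ef (ebasis m k l)) = m" if "k < m" "l < m" for k l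
      using C[OF that] by auto
    have "\<sigma> $$ (a*m+a, b*m+b) = (\<Sum>x\<in>({..<m}\<times>{..<m})\<times>({..<m}\<times>{..<m}). (case x of ((i,j),(k,l)) \<Rightarrow>
         \<rho> $$ (i*m+k, j*m+l) * (ebasis m i j $$ (a,b) * Ef (ebasis m k l) $$ (a,b))))"
      unfolding \<sigma>_def superop_tensor_def using that divmod_lt[of a m a m] divmod_lt[of b m b m]
      by (simp, intro sum.cong refl) (auto simp: dims)
    also have "\<dots> = (\<Sum>i<m. \<Sum>j<m. \<Sum>k<m. \<Sum>l<m.
         \<rho> $$ (i*m+k, j*m+l) * (ebasis m i j $$ (a,b) * Ef (ebasis m k l) $$ (a,b)))"
      by (simp only: sum_pair prod.case)
    also have "\<dots> = (\<Sum>i<m. \<Sum>j<m. \<Sum>k<m. \<Sum>l<m.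
         (if l = b then if k = a then if j = b then if i = a then Ef (ebasis m a b) $$ (a,b) / of_nat m else 0 else 0 else 0 else 0))"
      using that by (intro sum.cong refl) (auto simp: rho)
    also have "\<dots> = Ef (ebasis m a b) $$ (a,b) / of_nat m"
      using that by simp
    finally show ?thesis .
  qed
  have "chan_fid m Ef = (\<Sum>x<m*m. \<Sum>y<m*m. cnj (max_ent m x) * \<sigma> $$ (x,y) * max_ent m y)"
    unfolding chan_fid_def Let_def \<rho>_def[symmetric] \<sigma>_def[symmetric] ..
  also have "\<dots> = (\<Sum>a<m. \<Sum>a'<m. \<Sum>b<m. \<Sum>b'<m. cnj (max_ent m (a*m+a')) * \<sigma> $$ (a*m+a',b*m+b') * max_ent m (b*m+b'))"
    by (simp only: sum_split_mult)
  also have "\<dots> = (\<Sum>a<m. \<Sum>b<m. \<Sum>a'<m. \<Sum>b'<m. cnj (max_ent m (a*m+a')) * \<sigma> $$ (a*m+a',b*m+b') * max_ent m (b*m+b'))"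
    by (rule sum.cong[OF refl], rule sum.swap)
  also have "\<dots> = (\<Sum>a<m. \<Sum>b<m. \<Sum>a'<m. \<Sum>b'<m. if b' = b then (if a' = a then \<sigma> $$ (a*m+a,b*m+b) / of_nat m else 0) else 0)"
    by (intro sum.cong refl) (auto simp: max_ent_idx q_def[symmetric] cq qq[unfolded cq] sq mult_ac)
  also have "\<dots> = (\<Sum>a<m. \<Sum>b<m. \<sigma> $$ (a*m+a,b*m+b) / of_nat m)"
    by simp
  also have "\<dots> = (\<Sum>a<m. \<Sum>b<m. Ef (ebasis m a b) $$ (a,b) / (of_nat m * of_nat m))"
    by (intro sum.cong refl) (simp add: sig)
  finally show ?thesis by (simp add: sum_divide_distrib)
qed

definition zq :: "nat \<Rightarrow> nat set \<Rightarrow> pauli list" where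
  "zq m J = map (\<lambda>t. if t+1 \<in> J then PZ else PI) [0..<m]"
definition zl :: "nat \<Rightarrow> nat \<Rightarrow> nat set \<Rightarrow> pauli list" where
  "zl n k J = replicate k PI @ zq (n-k) J"

lemma length_zq[simp]: "length (zq m J) = m" by (simp add: zq_def)
lemma set_zq: "set (zq m J) \<subseteq> {PI,PZ}" by (auto simp: zq_def)
lemma length_zl[simp]: "k \<le> n \<Longrightarrow> length (zl n k J) = n" by (simp add: zl_def)

lemma pmul_zq: "pmul (zq m J) (zq m J') = zq m ((J - J') \<union> (J' - J))"
  by (rule nth_equalityI) (auto simp: pmul_def zq_def)
lemma pprod_IZ: "length P = length Q \<Longrightarrow> set P \<subseteq> {PI,PZ} \<Longrightarrow> set Q \<subseteq> {PI,PZ} \<Longrightarrow> pprod P Q = 1"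
proof (induction P Q rule: list_induct2)
  case (Cons a P b Q) then show ?case by (cases a; cases b) auto
qed simp
lemma pprod_zq: "pprod (zq m J) (zq m J') = 1"
  by (rule pprod_IZ) (auto simp: set_zq)

lemma pmat_zl: "pmat (zl n k J) = kron (1\<^sub>m (2^k)) (pmat (zq (n-k) J))"
  by (simp add: zl_def pmat_append pmat_rep_I)

lemma pmat_zq_mult: "pmat (zq m J) * pmat (zq m J') = pmat (zq m ((J - J') \<union> (J' - J)))"
  by (simp add: pmat_mult pmul_zq pprod_zq)

lemma pmat_zl_mult: "pmat (zl n k J) * pmat (zl n k J') = pmat (zl n k ((J - J') \<union> (J' - J)))"
  unfolding pmat_zl by (subst kron_mult[of _ "2^k" "2^k" _ "2^k" _ "2^(n-k)" "2^(n-k)" _ "2^(n-k)"]) (auto simp: pmat_zq_mult)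

lemma zl_empty: "k \<le> n \<Longrightarrow> zl n k {} = replicate n PI"
  by (simp add: zl_def zq_def replicate_add[symmetric] map_replicate_const)

lemma Z_at_zl: "k \<le> n \<Longrightarrow> 1 \<le> j \<Longrightarrow> Z_at n (j+k) = zl n k {j}"
  by (rule nth_equalityI) (auto simp: Z_at_def zl_def zq_def nth_append)

locale code =
  fixes n k :: nat and U :: "complex mat"
  assumes kn: "k \<le> n" and cl: "clifford n U"
begin

abbreviation "N \<equiv> (2::nat)^n"
abbreviation "m \<equiv> (2::nat)^k"
abbreviation "b \<equiv> (2::nat)^(n-k)"

lemma multNN[simp]: "X \<in> carrier_mat N N \<Longrightarrow> Y \<in> carrier_mat N N \<Longrightarrow> X * Y \<in> carrier_mat N N"
  for X Y :: "complex mat" by simp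

lemma mb: "m * b = N" using kn by (simp add: power_add[symmetric])

lemma U_carrier[simp]: "U \<in> carrier_mat N N" using cl by (simp add: clifford_def unitary_mat_def)
lemma adjU_carrier[simp]: "adj U \<in> carrier_mat N N" by simp
lemma UadjU: "U * adj U = 1\<^sub>m N" using cl by (simp add: clifford_def unitary_mat_def)
lemma adjUU: "adj U * U = 1\<^sub>m N" using cl by (simp add: clifford_def unitary_mat_def)

lemma conj_back: "A \<in> carrier_mat N N \<Longrightarrow> adj U * (U * A * adj U) * U = A"
proof -
  assume A: "A \<in> carrier_mat N N"
  have "adj U * (U * A * adj U) * U = (adj U * U) * A * (adj U * U)"
    using A by (simp add: assoc_mult_mat[of _ N N _ N _ N])
  then show ?thesis using A by (simp add: adjUU)
qed

lemma conj_fwd: "A \<in> carrier_mat N N \<Longrightarrow> U * (adj U * A * U) * adj U = A"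
proof -
  assume A: "A \<in> carrier_mat N N"
  have "U * (adj U * A * U) * adj U = (U * adj U) * A * (U * adj U)"
    using A by (simp add: assoc_mult_mat[of _ N N _ N _ N])
  then show ?thesis using A by (simp add: UadjU)
qed

lemma conj_mult: "A \<in> carrier_mat N N \<Longrightarrow> B \<in> carrier_mat N N \<Longrightarrow>
   (U * A * adj U) * (U * B * adj U) = U * (A * B) * adj U"
proof -
  assume A: "A \<in> carrier_mat N N" and B: "B \<in> carrier_mat N N"
  have "(U * A * adj U) * (U * B * adj U) = U * A * (adj U * U) * B * adj U"
    using A B by (simp add: assoc_mult_mat[of _ N N _ N _ N])
  then show ?thesis using A B by (simp add: adjUU assoc_mult_mat[of _ N N _ N _ N])
qed

lemma conj_smult: "A \<in> carrier_mat N N \<Longrightarrow> U * (c \<cdot>\<^sub>m A) * adj U = c \<cdot>\<^sub>m (U * A * adj U)"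
  using mult_smult_distrib[of U N N A N c] mult_smult_assoc_mat[of "U*A" N N "adj U" N c] by simp
lemma conj_smult': "A \<in> carrier_mat N N \<Longrightarrow> adj U * (c \<cdot>\<^sub>m A) * U = c \<cdot>\<^sub>m (adj U * A * U)"
  using mult_smult_distrib[of "adj U" N N A N c] mult_smult_assoc_mat[of "adj U*A" N N U N c] by simp

lemma clif_fwd: "P \<in> paulis n \<Longrightarrow> \<exists>Q\<in>paulis n. \<exists>c. cmod c = 1 \<and> U * pmat P * adj U = c \<cdot>\<^sub>m pmat Q"
  using cl by (simp add: clifford_def)

lemma pmat_paulis[simp]: "P \<in> paulis n \<Longrightarrow> pmat P \<in> carrier_mat N N"
  by (metis mem_Collect_eq paulis_def pmat_carrier)

lemma clif_inv: assumes "Q \<in> paulis n"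
  shows "\<exists>P\<in>paulis n. \<exists>c. cmod c = 1 \<and> adj U * pmat Q * U = c \<cdot>\<^sub>m pmat P"
proof -
  define f where "f P = (SOME Q. Q \<in> paulis n \<and> (\<exists>c. cmod c = 1 \<and> U * pmat P * adj U = c \<cdot>\<^sub>m pmat Q))" for P
  have fP: "f P \<in> paulis n \<and> (\<exists>c. cmod c = 1 \<and> U * pmat P * adj U = c \<cdot>\<^sub>m pmat (f P))" if "P \<in> paulis n" for P
    unfolding f_def by (rule someI_ex) (use clif_fwd[OF that] in blast)
  have bk: "pmat P = c \<cdot>\<^sub>m (adj U * pmat R0 * U)" if "P \<in> paulis n" "R0 \<in> paulis n" "U * pmat P * adj U = c \<cdot>\<^sub>m pmat R0" for P R0 c
  proof -
    have "pmat P = adj U * (U * pmat P * adj U) * U" using conj_back that(1) by simp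
    also have "\<dots> = c \<cdot>\<^sub>m (adj U * pmat R0 * U)" using that by (simp add: conj_smult')
    finally show ?thesis .
  qed
  have inj: "inj_on f (paulis n)"
  proof (rule inj_onI)
    fix P P' assume P: "P \<in> paulis n" and P': "P' \<in> paulis n" and eq: "f P = f P'"
    obtain c where c: "cmod c = 1" "U * pmat P * adj U = c \<cdot>\<^sub>m pmat (f P)" using fP[OF P] by blast
    obtain c' where c': "cmod c' = 1" "U * pmat P' * adj U = c' \<cdot>\<^sub>m pmat (f P)" using fP[OF P'] eq by auto
    have e1: "pmat P = c \<cdot>\<^sub>m (adj U * pmat (f P) * U)" by (rule bk[OF P _ c(2)]) (use fP[OF P] in auto)
    have e2: "pmat P' = c' \<cdot>\<^sub>m (adj U * pmat (f P) * U)" by (rule bk[OF P' _ c'(2)]) (use fP[OF P] in auto)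
    have "c' \<cdot>\<^sub>m pmat P = c \<cdot>\<^sub>m pmat P'" unfolding e1 e2 by (simp add: smult_smult_m mult.commute)
    moreover have "c' \<noteq> 0" using c' by auto
    ultimately show "P = P'" using pmat_inj P P' by (auto simp: paulis_def)
  qed
  have "f ` paulis n = paulis n"
    by (rule endo_inj_surj[OF finite_paulis _ inj]) (use fP in auto)
  then obtain P where P: "P \<in> paulis n" "Q = f P" using assms by (metis imageE)
  obtain c where c: "cmod c = 1" "U * pmat P * adj U = c \<cdot>\<^sub>m pmat Q" using fP[OF P(1)] P(2) by blast
  have "pmat P = c \<cdot>\<^sub>m (adj U * pmat Q * U)" by (rule bk[OF P(1) assms c(2)])
  then have "(1/c) \<cdot>\<^sub>m pmat P = adj U * pmat Q * U" using c(1) by (auto simp: smult_smult_m)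
  then show ?thesis using P(1) c(1) by (intro bexI[of _ P] exI[of _ "1/c"]) (auto simp: norm_divide)
qed

end

context code begin

lemma U_dims[simp]: "dim_row U = N" "dim_col U = N" using U_carrier by (auto simp del: U_carrier)
lemma length_zl'[simp]: "length (zl n k J) = n" using kn by simp

lemma zl_carrier[simp]: "pmat (zl n k J) \<in> carrier_mat N N"
  using pmat_carrier[of "zl n k J"] kn by simp

lemma zl_sq: "pmat (zl n k J) * pmat (zl n k J) = 1\<^sub>m N"
  using pmat_sq[of "zl n k J"] kn by simp

lemma Zat_paulis: "Z_at n t \<in> paulis n" by (simp add: Z_at_def paulis_def)

lemma gen_eq: "1 \<le> j \<Longrightarrow> gen n k U j = U * pmat (zl n k {j}) * adj U"
  by (simp add: gen_def Z_at_zl kn)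

lemma gen_carrier[simp]: "gen n k U j \<in> carrier_mat N N"
  unfolding gen_def using pmat_carrier[of "Z_at n (j+k)"] by (simp add: Z_at_def)

lemma adj_conj: "A \<in> carrier_mat N N \<Longrightarrow> adj (U * A * adj U) = U * adj A * adj U"
  by (simp add: adj_mult[of _ N N _ N] assoc_mult_mat[of _ N N _ N _ N])

lemma gen_adj: "adj (gen n k U j) = gen n k U j"
  unfolding gen_def using adj_conj[of "pmat (Z_at n (j+k))"] Zat_paulis by (simp add: pmat_adj)

lemma stab_form: "g \<in> stabilizer n k U \<Longrightarrow> \<exists>J. g = U * pmat (zl n k J) * adj U"
proof (induction rule: stabilizer.induct)
  case one
  have "U * pmat (zl n k {}) * adj U = 1\<^sub>m N" using kn by (simp add: zl_empty pmat_rep_I UadjU)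
  then show ?case by metis
next
  case (mul M j)
  then obtain J where J: "M = U * pmat (zl n k J) * adj U" by blast
  have "M * gen n k U j = U * pmat (zl n k ((J - {j}) \<union> ({j} - J))) * adj U"
    using mul.hyps(2) by (simp add: J gen_eq conj_mult pmat_zl_mult)
  then show ?case by blast
next
  case (mul_inv M j)
  then obtain J where J: "M = U * pmat (zl n k J) * adj U" by blast
  have "M * adj (gen n k U j) = U * pmat (zl n k ((J - {j}) \<union> ({j} - J))) * adj U"
    using mul_inv.hyps(2) by (simp only: gen_adj) (simp add: J gen_eq conj_mult pmat_zl_mult)
  then show ?case by blast
qed

lemma stab_carrier: "g \<in> stabilizer n k U \<Longrightarrow> g \<in> carrier_mat N N"
  using stab_form by fastforce

lemma zl_restrict: "zl n k J = zl n k (J \<inter> {1..n-k})"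
  by (auto simp: zl_def zq_def)

lemma stab_in_fin: "finite J \<Longrightarrow> J \<subseteq> {1..n-k} \<Longrightarrow> U * pmat (zl n k J) * adj U \<in> stabilizer n k U"
proof (induction J rule: finite_induct)
  case empty
  have "U * pmat (zl n k {}) * adj U = 1\<^sub>m N" using kn by (simp add: zl_empty pmat_rep_I UadjU)
  then show ?case using stabilizer.one by metis
next
  case (insert j J)
  have j: "j \<in> {1..n-k}" using insert by auto
  have "U * pmat (zl n k J) * adj U * gen n k U j \<in> stabilizer n k U"
    by (rule stabilizer.mul) (use insert j in auto)
  moreover have "U * pmat (zl n k J) * adj U * gen n k U j = U * pmat (zl n k (insert j J)) * adj U"
  proof -
    have e: "(J - {j}) \<union> ({j} - J) = insert j J" using insert by auto
    show ?thesis using j by (simp add: gen_eq conj_mult pmat_zl_mult e)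
  qed
  ultimately show ?case by simp
qed

lemma stab_in: "U * pmat (zl n k J) * adj U \<in> stabilizer n k U"
  using stab_in_fin[of "J \<inter> {1..n-k}"] zl_restrict[of J] by auto

definition V0 :: "complex mat" where
  "V0 = mat N m (\<lambda>(r,i). if r = i*b then 1 else 0)"

lemma V0_carrier[simp]: "V0 \<in> carrier_mat N m" by (simp add: V0_def)
lemma V0_dims[simp]: "dim_row V0 = N" "dim_col V0 = m" by (simp_all add: V0_def)

lemma AV0: assumes "A \<in> carrier_mat n' N" "r < n'" "i < m"
  shows "(A * V0) $$ (r,i) = A $$ (r, i*b)"
proof -
  have ib: "i*b < N" using divmod_lt[OF assms(3), of 0 b] mb by simp
  have "(A * V0) $$ (r,i) = (\<Sum>u<N. A$$(r,u) * V0$$(u,i))"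
    by (rule mult_entry) (use assms in auto)
  also have "\<dots> = (\<Sum>u<N. if u = i*b then A$$(r,i*b) else 0)"
    using assms by (intro sum.cong refl) (auto simp: V0_def)
  finally show ?thesis using ib by simp
qed

lemma zlV0: "pmat (zl n k J) * V0 = V0"
proof (rule eq_matI)
  fix r i assume "r < dim_row V0" "i < dim_col V0"
  then have ri: "r < N" "i < m" by (auto simp: V0_def)
  have rb: "r div b < m" "r mod b < b" using ri mb divmod_bound[of r m b] by auto
  have "(pmat (zl n k J) * V0) $$ (r,i) = pmat (zl n k J) $$ (r, i*b)"
    by (rule AV0) (use ri in auto)
  also have "\<dots> = 1\<^sub>m m $$ (r div b, i) * pmat (zq (n-k) J) $$ (r mod b, 0)"
    unfolding pmat_zl using ri mb divmod_lt[OF ri(2), of 0 b] by simp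
  also have "\<dots> = (if r div b = i then 1 else 0) * (if r mod b = 0 then 1 else 0)"
    using rb ri set_zq[of "n-k" J] by (simp add: pmat_IZ_col)
  also have "\<dots> = V0 $$ (r,i)"
  proof -
    have "(r div b = i \<and> r mod b = 0) = (r = i*b)"
      using idx_eq_divmod[of r "i*b" b] divmod_lt[of i m 0 b] ri by auto
    then show ?thesis using ri by (auto simp: V0_def)
  qed
  finally show "(pmat (zl n k J) * V0) $$ (r,i) = V0 $$ (r,i)" .
qed (auto simp: V0_def)

lemma UV0_carrier[simp]: "U * V0 \<in> carrier_mat N m" by (rule mult_carrier_mat) auto

lemma genV0: "1 \<le> j \<Longrightarrow> gen n k U j * (U * V0) = U * V0"
proof -
  assume j: "1 \<le> j"
  have "gen n k U j * (U * V0) = U * pmat (zl n k {j}) * (adj U * U) * V0"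
    by (simp add: gen_eq[OF j] assoc_mult_mat[of _ N N _ N _ m] assoc_mult_mat[of _ N N _ N _ N])
  also have "\<dots> = U * (pmat (zl n k {j}) * V0)"
    by (simp add: adjUU assoc_mult_mat[of _ N N _ N _ m])
  finally show ?thesis by (simp add: zlV0)
qed

lemma gen_sq: "1 \<le> j \<Longrightarrow> gen n k U j * gen n k U j = 1\<^sub>m N"
  by (simp add: gen_eq conj_mult zl_sq UadjU)

end

context code begin

lemma syndrome_nth: "1 \<le> j \<Longrightarrow> j \<le> n-k \<Longrightarrow>
   syndrome n k U E ! (j-1) = (\<not> (pmat E * gen n k U j = gen n k U j * pmat E))"
  unfolding syndrome_def by (subst nth_map) (auto simp del: upt_Suc)

lemma length_syndrome[simp]: "length (syndrome n k U E) = n - k"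
  by (simp add: syndrome_def del: upt_Suc)

lemma gen_dims[simp]: "dim_row (gen n k U j) = N" "dim_col (gen n k U j) = N"
  using gen_carrier[of j] by (auto simp del: gen_carrier)

lemma mat_neg_self_zero:
  assumes "Y \<in> carrier_mat N N" "Y = (-1::complex) \<cdot>\<^sub>m Y"
  shows "Y = 0\<^sub>m N N"
proof (rule eq_matI)
  fix i j assume "i < dim_row (0\<^sub>m N N)" "j < dim_col (0\<^sub>m N N)"
  then have ij: "i < N" "j < N" by auto
  have "Y $$ (i,j) = ((-1::complex) \<cdot>\<^sub>m Y) $$ (i,j)" using arg_cong[OF assms(2), of "\<lambda>M. M $$ (i,j)"] .
  then show "Y $$ (i,j) = 0\<^sub>m N N $$ (i,j)" using ij assms(1) by auto
qed (use assms in auto)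

lemma gen_comm_bit:
  assumes E: "E \<in> paulis n" and j: "1 \<le> j" "j \<le> n-k"
  shows "pmat E * gen n k U j = (if syndrome n k U E ! (j-1) then -1 else 1) \<cdot>\<^sub>m (gen n k U j * pmat E)"
proof -
  let ?g = "gen n k U j"
  obtain Q c where Q: "Q \<in> paulis n" "cmod c = 1" "?g = c \<cdot>\<^sub>m pmat Q"
    using clif_fwd[OF Zat_paulis[of "j+k"]] unfolding gen_def by blast
  have lenQ: "length Q = length E" using Q E by (simp add: paulis_def)
  have PE: "pmat E \<in> carrier_mat N N" "pmat Q \<in> carrier_mat N N" using E Q by auto
  have eq: "pmat E * ?g = peps E Q \<cdot>\<^sub>m (?g * pmat E)"
  proof -
    have "pmat E * ?g = c \<cdot>\<^sub>m (pmat E * pmat Q)" unfolding Q(3) using PE by (simp add: mult_smult_distrib[of _ N N _ N])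
    also have "\<dots> = c \<cdot>\<^sub>m (peps E Q \<cdot>\<^sub>m (pmat Q * pmat E))" using pmat_comm[of E Q] lenQ by simp
    also have "\<dots> = peps E Q \<cdot>\<^sub>m (?g * pmat E)" unfolding Q(3) using PE
      by (simp add: mult_smult_assoc_mat[of _ N N _ N] smult_smult_m mult.commute)
    finally show ?thesis .
  qed
  show ?thesis
  proof (cases "peps E Q = 1")
    case True
    then have c: "pmat E * ?g = ?g * pmat E" using eq by simp
    have "\<not> syndrome n k U E ! (j-1)" using c syndrome_nth[OF j] by simp
    then show ?thesis using c by simp
  next
    case False
    then have m1: "peps E Q = -1" using peps_pm by blast
    have "\<not> (pmat E * ?g = ?g * pmat E)"
    proof
      assume c: "pmat E * ?g = ?g * pmat E"
      have "?g * pmat E = (-1::complex) \<cdot>\<^sub>m (?g * pmat E)" using eq c m1 by metis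
      then have z: "?g * pmat E = 0\<^sub>m N N" using PE by (intro mat_neg_self_zero) auto
      have "(?g * pmat E) * (pmat E * ?g) = ?g * (pmat E * pmat E) * ?g"
        using PE by (simp add: assoc_mult_mat[of _ N N _ N _ N])
      also have "\<dots> = 1\<^sub>m N" using E j by (simp add: pmat_sq paulis_def gen_sq)
      finally have "0\<^sub>m N N * (pmat E * ?g) = 1\<^sub>m N" using z by simp
      moreover have "0\<^sub>m N N * (pmat E * ?g) = 0\<^sub>m N N" by (rule left_mult_zero_mat) (use PE in auto)
      ultimately have "(0\<^sub>m N N :: complex mat) = 1\<^sub>m N" by simp
      then have "(0\<^sub>m N N :: complex mat) $$ (0,0) = 1\<^sub>m N $$ (0,0)" by simp
      then show False by simp
    qed
    then have "syndrome n k U E ! (j-1)" using syndrome_nth[OF j] by simp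
    then show ?thesis using eq m1 by simp
  qed
qed

definition Fj :: "bool list \<Rightarrow> nat \<Rightarrow> complex mat" where
  "Fj s j = (1/2) \<cdot>\<^sub>m (1\<^sub>m N + (if s ! (j - 1) then -1 else 1) \<cdot>\<^sub>m gen n k U j)"

lemma Fj_carrier[simp]: "Fj s j \<in> carrier_mat N N" by (simp add: Fj_def)

lemma proj_foldr: "proj n k U s = foldr (\<lambda>j M. Fj s j * M) [1..<n-k+1] (1\<^sub>m N)"
  by (simp add: proj_def Fj_def)

lemma Fj_adj: "adj (Fj s j) = Fj s j"
  unfolding Fj_def by (simp add: adj_smult adj_add[of _ N N] gen_adj)

lemma Fj_X:
  assumes E: "E \<in> paulis n" and j: "1 \<le> j" "j \<le> n-k"
  shows "Fj s j * (pmat E * (U * V0)) = (if s!(j-1) = syndrome n k U E ! (j-1) then 1 else 0) \<cdot>\<^sub>m (pmat E * (U * V0))"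
proof -
  let ?g = "gen n k U j" and ?X = "pmat E * (U * V0)"
  define \<sigma> :: complex where "\<sigma> = (if s ! (j - 1) then -1 else 1)"
  define \<tau> :: complex where "\<tau> = (if syndrome n k U E ! (j-1) then -1 else 1)"
  have PE: "pmat E \<in> carrier_mat N N" using E by simp
  have X: "?X \<in> carrier_mat N m" using PE by (rule mult_carrier_mat) simp
  have gE: "?g * pmat E = \<tau> \<cdot>\<^sub>m (pmat E * ?g)"
    using gen_comm_bit[OF E j] unfolding \<tau>_def[symmetric]
    by (auto simp: \<tau>_def smult_smult_m)
  have gX: "?g * ?X = \<tau> \<cdot>\<^sub>m ?X"
  proof -
    have "?g * ?X = (?g * pmat E) * (U * V0)" using PE by (simp add: assoc_mult_mat[of _ N N _ N _ m])
    also have "\<dots> = \<tau> \<cdot>\<^sub>m (pmat E * (?g * (U * V0)))" unfolding gE using PE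
      by (simp add: mult_smult_assoc_mat[of _ N N _ m] assoc_mult_mat[of _ N N _ N _ m])
    also have "\<dots> = \<tau> \<cdot>\<^sub>m ?X" using j by (simp add: genV0)
    finally show ?thesis .
  qed
  have "Fj s j * ?X = (1/2) \<cdot>\<^sub>m ((1\<^sub>m N + \<sigma> \<cdot>\<^sub>m ?g) * ?X)"
    unfolding Fj_def \<sigma>_def[symmetric] using X by (simp add: mult_smult_assoc_mat[of _ N N _ m])
  also have "(1\<^sub>m N + \<sigma> \<cdot>\<^sub>m ?g) * ?X = ?X + \<sigma> \<cdot>\<^sub>m (?g * ?X)"
    using X by (simp add: add_mult_distrib_mat[of _ N N _ _ m] mult_smult_assoc_mat[of _ N N _ m] left_mult_one_mat[OF X])
  also have "\<dots> = ?X + (\<sigma> * \<tau>) \<cdot>\<^sub>m ?X" by (simp add: gX smult_smult_m)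
  finally have "Fj s j * ?X = (1/2) \<cdot>\<^sub>m (?X + (\<sigma> * \<tau>) \<cdot>\<^sub>m ?X)" .
  also have "\<dots> = (if s!(j-1) = syndrome n k U E ! (j-1) then 1 else 0) \<cdot>\<^sub>m ?X"
    by (rule eq_matI) (use X in \<open>auto simp: \<sigma>_def \<tau>_def field_simps\<close>)
  finally show ?thesis .
qed

lemma proj_lemma:
  assumes E: "E \<in> paulis n" and js: "set js \<subseteq> {1..n-k}"
  shows "foldr (\<lambda>j M. Fj s j * M) js (1\<^sub>m N) * (pmat E * (U * V0))
    = (if \<forall>j\<in>set js. s!(j-1) = syndrome n k U E ! (j-1) then 1 else 0) \<cdot>\<^sub>m (pmat E * (U * V0))"
  using js
proof (induction js)
  case Nil
  have X: "pmat E * (U * V0) \<in> carrier_mat N m" using E by (intro mult_carrier_mat) auto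
  then show ?case by (simp add: left_mult_one_mat[OF X])
next
  case (Cons j js)
  let ?X = "pmat E * (U * V0)" and ?R = "foldr (\<lambda>j M. Fj s j * M) js (1\<^sub>m N)"
  have X: "?X \<in> carrier_mat N m" using E by (intro mult_carrier_mat) auto
  have R: "?R \<in> carrier_mat N N" by (induction js) auto
  have j: "1 \<le> j" "j \<le> n-k" using Cons.prems by auto
  have "foldr (\<lambda>j M. Fj s j * M) (j#js) (1\<^sub>m N) * ?X = Fj s j * (?R * ?X)"
    using X R by (simp add: assoc_mult_mat[of _ N N _ N _ m])
  also have "\<dots> = Fj s j * ((if \<forall>j\<in>set js. s!(j-1) = syndrome n k U E ! (j-1) then 1 else 0) \<cdot>\<^sub>m ?X)"
    using Cons by simp
  also have "\<dots> = (if \<forall>j\<in>set js. s!(j-1) = syndrome n k U E ! (j-1) then 1 else 0) \<cdot>\<^sub>m (Fj s j * ?X)"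
    using X by (simp add: mult_smult_distrib[of _ N N _ m])
  also have "\<dots> = (if \<forall>j\<in>set (j#js). s!(j-1) = syndrome n k U E ! (j-1) then 1 else 0) \<cdot>\<^sub>m ?X"
    using X by (simp add: Fj_X[OF E j] smult_smult_m)
  finally show ?case .
qed

lemma foldr_adj:
  assumes "\<And>j. G j \<in> carrier_mat N N" "\<And>j. adj (G j) = G j"
  shows "adj (foldr (\<lambda>j M. G j * M) js (1\<^sub>m N)) = foldr (\<lambda>j M. G j * M) (rev js) (1\<^sub>m N)"
proof -
  have fc: "foldr (\<lambda>j M. G j * M) xs (1\<^sub>m N) \<in> carrier_mat N N" for xs
    using assms by (induction xs) auto
  have fa: "foldr (\<lambda>j M. G j * M) xs A = foldr (\<lambda>j M. G j * M) xs (1\<^sub>m N) * A" if "A \<in> carrier_mat N N" for xs A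
    using that
  proof (induction xs)
    case Nil then show ?case by simp
  next
    case (Cons x xs)
    then show ?case using fc[of xs] assms by (simp add: assoc_mult_mat[of _ N N _ N _ N])
  qed
  show ?thesis
  proof (induction js)
    case Nil then show ?case by simp
  next
    case (Cons j js)
    have "adj (foldr (\<lambda>j M. G j * M) (j#js) (1\<^sub>m N)) = adj (foldr (\<lambda>j M. G j * M) js (1\<^sub>m N)) * G j"
      using fc[of js] assms by (simp add: adj_mult[of _ N N _ N])
    also have "\<dots> = foldr (\<lambda>j M. G j * M) (rev js) (G j)"
      using Cons fa[of "G j" "rev js"] assms by simp
    finally show ?case using right_mult_one_mat[OF assms(1)[of j]] by simp
  qed
qed

lemma foldr_Fj_carrier: "foldr (\<lambda>j M. Fj s j * M) xs (1\<^sub>m N) \<in> carrier_mat N N"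
  by (induction xs) auto
lemma proj_carrier[simp]: "proj n k U s \<in> carrier_mat N N"
  unfolding proj_foldr by (rule foldr_Fj_carrier)

lemma proj_col:
  assumes E: "E \<in> paulis n" and that: "length s = n - k"
  shows "proj n k U s * (pmat E * (U * V0)) = (if syndrome n k U E = s then 1 else 0) \<cdot>\<^sub>m (pmat E * (U * V0))"
    and "adj (proj n k U s) * (pmat E * (U * V0)) = (if syndrome n k U E = s then 1 else 0) \<cdot>\<^sub>m (pmat E * (U * V0))"
proof -
  have cond: "(\<forall>j\<in>set [1..<n-k+1]. s!(j-1) = syndrome n k U E ! (j-1)) = (syndrome n k U E = s)"
  proof
    assume h: "\<forall>j\<in>set [1..<n-k+1]. s!(j-1) = syndrome n k U E ! (j-1)"
    show "syndrome n k U E = s"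
    proof (rule nth_equalityI)
      show "length (syndrome n k U E) = length s" using that by simp
      fix i assume "i < length (syndrome n k U E)"
      then have "Suc i \<in> set [1..<n-k+1]" by (simp del: upt_Suc)
      then show "syndrome n k U E ! i = s ! i" using h by fastforce
    qed
  qed auto
  have "proj n k U s * (pmat E * (U * V0)) = (if \<forall>j\<in>set [1..<n-k+1]. s!(j-1) = syndrome n k U E ! (j-1) then 1 else 0) \<cdot>\<^sub>m (pmat E * (U * V0))"
    unfolding proj_foldr by (rule proj_lemma[OF E]) auto
  then show "proj n k U s * (pmat E * (U * V0)) = (if syndrome n k U E = s then 1 else 0) \<cdot>\<^sub>m (pmat E * (U * V0))"
    by (simp only: cond)
  have "adj (proj n k U s) = foldr (\<lambda>j M. Fj s j * M) (rev [1..<n-k+1]) (1\<^sub>m N)"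
    unfolding proj_foldr by (rule foldr_adj) (auto simp: Fj_adj)
  moreover have "foldr (\<lambda>j M. Fj s j * M) (rev [1..<n-k+1]) (1\<^sub>m N) * (pmat E * (U * V0)) = (if \<forall>j\<in>set (rev [1..<n-k+1]). s!(j-1) = syndrome n k U E ! (j-1) then 1 else 0) \<cdot>\<^sub>m (pmat E * (U * V0))"
    by (rule proj_lemma[OF E]) auto
  ultimately show "adj (proj n k U s) * (pmat E * (U * V0)) = (if syndrome n k U E = s then 1 else 0) \<cdot>\<^sub>m (pmat E * (U * V0))"
    by (simp only: cond set_rev)
qed

end

lemma peps_nth: "length P = length Q \<Longrightarrow> peps P Q = (\<Prod>i<length P. eps (P!i) (Q!i))"
proof (induction P Q rule: list_induct2)
  case (Cons a P b Q) then show ?case by (simp add: prod.lessThan_Suc_shift del: prod.lessThan_Suc)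
qed simp

lemma eps_I[simp]: "eps a PI = 1" by (simp add: eps_def)

lemma peps_single: assumes "length P = length Q" "t < length P" "\<And>i. i < length P \<Longrightarrow> i \<noteq> t \<Longrightarrow> Q!i = PI"
  shows "peps P Q = eps (P!t) (Q!t)"
proof -
  have "peps P Q = (\<Prod>i<length P. eps (P!i) (Q!i))" by (rule peps_nth) (rule assms(1))
  also have "\<dots> = (\<Prod>i<length P. if i = t then eps (P!t) (Q!t) else 1)"
    by (rule prod.cong) (auto simp: assms(3))
  also have "\<dots> = eps (P!t) (Q!t)" using assms(2) by simp
  finally show ?thesis .
qed

locale code_T = code +
  fixes Es :: "bool list \<Rightarrow> pauli list"
  assumes reps: "syndrome_reps n k U Es"
begin

lemma Es_paulis: "length s = n - k \<Longrightarrow> Es s \<in> paulis n"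
  using reps by (simp add: syndrome_reps_def syndromes_def)
lemma Es_syn: "length s = n - k \<Longrightarrow> syndrome n k U (Es s) = s"
  using reps by (simp add: syndrome_reps_def syndromes_def)

lemma stab_gen_comm: "g \<in> stabilizer n k U \<Longrightarrow> 1 \<le> j \<Longrightarrow> g * gen n k U j = gen n k U j * g"
proof -
  assume g: "g \<in> stabilizer n k U" and j: "1 \<le> j"
  obtain J where J: "g = U * pmat (zl n k J) * adj U" using stab_form[OF g] by blast
  have e: "(J - {j}) \<union> ({j} - J) = ({j} - J) \<union> (J - {j})" by auto
  show ?thesis using j by (simp add: J gen_eq conj_mult pmat_zl_mult e)
qed

lemma stab_sq: "g \<in> stabilizer n k U \<Longrightarrow> g * g = 1\<^sub>m N"
proof -
  assume g: "g \<in> stabilizer n k U"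
  obtain J where J: "g = U * pmat (zl n k J) * adj U" using stab_form[OF g] by blast
  show ?thesis by (simp add: J conj_mult zl_sq UadjU)
qed

lemma cancel_right:
  fixes X Y g :: "complex mat"
  assumes "X \<in> carrier_mat N N" "Y \<in> carrier_mat N N" "g \<in> carrier_mat N N" "g * g = 1\<^sub>m N" "X * g = Y * g"
  shows "X = Y"
proof -
  have "X * (g*g) = Y * (g*g)"
    using assms(5) assoc_mult_mat[of X N N g N g N] assoc_mult_mat[of Y N N g N g N] assms(1-3) by metis
  then show ?thesis using assms(4) right_mult_one_mat[OF assms(1)] right_mult_one_mat[OF assms(2)] by simp
qed

lemma TS_imp:
  assumes E: "E \<in> TS_set n k U Es"
  shows "\<exists>J c. c \<noteq> 0 \<and> pmat (Es (syndrome n k U E)) * pmat E = c \<cdot>\<^sub>m (U * pmat (zl n k J) * adj U)"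
proof -
  obtain h g c0 where h: "h \<in> rep_set (n-k) Es" and g: "g \<in> stabilizer n k U" and c0: "c0 \<noteq> 0"
    and eq: "pmat h * g = c0 \<cdot>\<^sub>m pmat E" and EP: "E \<in> paulis n"
    using E unfolding TS_set_def by blast
  obtain s' where s': "length s' = n - k" "h = Es s'" using h by (auto simp: rep_set_def syndromes_def)
  have hP: "h \<in> paulis n" using Es_paulis[OF s'(1)] s' by simp
  have H: "pmat h \<in> carrier_mat N N" using hP by simp
  have G: "g \<in> carrier_mat N N" using stab_carrier[OF g] .
  have PE: "pmat E \<in> carrier_mat N N" using EP by simp
  have hh: "pmat h * pmat h = 1\<^sub>m N" using hP pmat_sq[of h] by (simp add: paulis_def)
  have Eform: "pmat E = (1/c0) \<cdot>\<^sub>m (pmat h * g)" using eq c0 by (simp add: smult_smult_m)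
  have synE: "syndrome n k U E = s'"
  proof (rule nth_equalityI)
    show "length (syndrome n k U E) = length s'" using s' by simp
    fix i assume "i < length (syndrome n k U E)"
    then have i: "1 \<le> Suc i" "Suc i \<le> n-k" by auto
    let ?j = "Suc i" let ?G = "gen n k U ?j"
    have "(pmat E * ?G = ?G * pmat E) = (pmat h * ?G = ?G * pmat h)"
    proof -
      have l: "pmat E * ?G = (1/c0) \<cdot>\<^sub>m ((pmat h * ?G) * g)"
        unfolding Eform using H G
        by (simp add: mult_smult_assoc_mat[of _ N N _ N] assoc_mult_mat[of _ N N _ N _ N] stab_gen_comm[OF g])
      have r: "?G * pmat E = (1/c0) \<cdot>\<^sub>m ((?G * pmat h) * g)"
        unfolding Eform using H G
        by (simp add: mult_smult_distrib[of _ N N _ N] assoc_mult_mat[of _ N N _ N _ N])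
      have "(pmat E * ?G = ?G * pmat E) = ((pmat h * ?G) * g = (?G * pmat h) * g)"
      proof
        assume "pmat E * ?G = ?G * pmat E"
        then have "(1/c0) \<cdot>\<^sub>m ((pmat h * ?G) * g) = (1/c0) \<cdot>\<^sub>m ((?G * pmat h) * g)" using l r by simp
        then have "c0 \<cdot>\<^sub>m ((1/c0) \<cdot>\<^sub>m ((pmat h * ?G) * g)) = c0 \<cdot>\<^sub>m ((1/c0) \<cdot>\<^sub>m ((?G * pmat h) * g))" by simp
        then show "(pmat h * ?G) * g = (?G * pmat h) * g" using c0 by (simp add: smult_smult_m)
      qed (simp add: l r)
      also have "\<dots> = (pmat h * ?G = ?G * pmat h)"
        using cancel_right[of "pmat h * ?G" "?G * pmat h" g] H G stab_sq[OF g] by auto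
      finally show ?thesis .
    qed
    then show "syndrome n k U E ! i = s' ! i"
      using syndrome_nth[OF i, of E] syndrome_nth[OF i, of h] Es_syn[OF s'(1)] s'(2) by simp
  qed
  have "pmat h * pmat E = (1/c0) \<cdot>\<^sub>m g"
  proof -
    have "pmat h * pmat E = (1/c0) \<cdot>\<^sub>m (pmat h * (pmat h * g))"
      unfolding Eform using H G by (simp add: mult_smult_distrib[of _ N N _ N])
    also have "pmat h * (pmat h * g) = g" using H G hh by (simp add: assoc_mult_mat[of _ N N _ N _ N, symmetric])
    finally show ?thesis .
  qed
  moreover obtain J where "g = U * pmat (zl n k J) * adj U" using stab_form[OF g] by blast
  ultimately show ?thesis using synE s'(2) c0 by (intro exI[of _ J] exI[of _ "1/c0"]) auto
qed

lemma imp_TS: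
  assumes EP: "E \<in> paulis n" and R: "R \<in> paulis n" and c: "c \<noteq> 0"
    and B: "adj U * (pmat (Es (syndrome n k U E)) * pmat E) * U = c \<cdot>\<^sub>m pmat R"
    and R1: "set (take k R) \<subseteq> {PI}"
  shows "E \<in> TS_set n k U Es"
proof -
  let ?s = "syndrome n k U E"
  let ?h = "Es ?s"
  have ls: "length ?s = n - k" by simp
  have hP: "?h \<in> paulis n" using Es_paulis[OF ls] .
  have H: "pmat ?h \<in> carrier_mat N N" using hP by simp
  have PE: "pmat E \<in> carrier_mat N N" using EP by simp
  have PR: "pmat R \<in> carrier_mat N N" using R by simp
  have lenR: "length R = n" using R by (simp add: paulis_def)
  let ?HE = "pmat ?h * pmat E"
  have HE: "?HE \<in> carrier_mat N N" using H PE by simp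
  have comm: "?HE * gen n k U j = gen n k U j * ?HE" if j: "1 \<le> j" "j \<le> n-k" for j
  proof -
    let ?G = "gen n k U j"
    have same: "syndrome n k U ?h ! (j-1) = ?s ! (j-1)" using Es_syn[OF ls] by simp
    define \<tau> :: complex where "\<tau> = (if ?s ! (j-1) then -1 else 1)"
    have tt: "\<tau> * \<tau> = 1" by (simp add: \<tau>_def)
    have c1: "pmat ?h * ?G = \<tau> \<cdot>\<^sub>m (?G * pmat ?h)" using gen_comm_bit[OF hP j] same by (simp add: \<tau>_def)
    have c2: "pmat E * ?G = \<tau> \<cdot>\<^sub>m (?G * pmat E)" using gen_comm_bit[OF EP j] by (simp add: \<tau>_def)
    have "?HE * ?G = pmat ?h * (pmat E * ?G)" using H PE by (simp add: assoc_mult_mat[of _ N N _ N _ N])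
    also have "\<dots> = \<tau> \<cdot>\<^sub>m ((pmat ?h * ?G) * pmat E)" unfolding c2 using H PE
      by (simp add: mult_smult_distrib[of _ N N _ N] assoc_mult_mat[of _ N N _ N _ N])
    also have "\<dots> = (\<tau> * \<tau>) \<cdot>\<^sub>m (?G * ?HE)" unfolding c1 using H PE
      by (simp add: mult_smult_assoc_mat[of _ N N _ N] assoc_mult_mat[of _ N N _ N _ N] smult_smult_m)
    finally show ?thesis using tt by simp
  qed
  have Rcomm: "pmat R * pmat (zl n k {j}) = pmat (zl n k {j}) * pmat R" if j: "1 \<le> j" "j \<le> n-k" for j
  proof -
    let ?Z = "pmat (zl n k {j})"
    have Z: "?Z \<in> carrier_mat N N" by simp
    have B': "adj U * ?HE * U = c \<cdot>\<^sub>m pmat R" using B .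
    have UZ: "U * ?Z = gen n k U j * U"
      using j by (simp add: gen_eq assoc_mult_mat[of _ N N _ N _ N] adjUU)
    have ZU: "?Z * adj U = adj U * gen n k U j"
      using j by (simp add: gen_eq assoc_mult_mat[of _ N N _ N _ N, symmetric] adjUU)
    have ZU': "adj U * (gen n k U j * X) = ?Z * (adj U * X)" if X: "X \<in> carrier_mat N N" for X
    proof -
      have "adj U * (gen n k U j * X) = (adj U * gen n k U j) * X"
        using X by (simp add: assoc_mult_mat[of _ N N _ N _ N])
      also have "\<dots> = (?Z * adj U) * X" by (simp add: ZU)
      also have "\<dots> = ?Z * (adj U * X)" using X by (simp add: assoc_mult_mat[of _ N N _ N _ N])
      finally show ?thesis .
    qed
    have "(adj U * ?HE * U) * ?Z = adj U * (pmat ?h * (pmat E * (U * ?Z)))"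
      using H PE by (simp add: assoc_mult_mat[of _ N N _ N _ N])
    also have "\<dots> = adj U * ((?HE * gen n k U j) * U)"
      using H PE by (simp add: UZ assoc_mult_mat[of _ N N _ N _ N])
    also have "\<dots> = adj U * (gen n k U j * (?HE * U))" 
      using H PE comm[OF j] by (simp add: assoc_mult_mat[of _ N N _ N _ N, symmetric])
    also have "\<dots> = ?Z * (adj U * (?HE * U))" using H PE by (simp add: ZU')
    also have "\<dots> = ?Z * (adj U * ?HE * U)" using H PE by (simp add: assoc_mult_mat[of _ N N _ N _ N])
    finally have "(c \<cdot>\<^sub>m pmat R) * ?Z = ?Z * (c \<cdot>\<^sub>m pmat R)" unfolding B' .
    then have "c \<cdot>\<^sub>m (pmat R * ?Z) = c \<cdot>\<^sub>m (?Z * pmat R)"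
      using PR by (simp add: mult_smult_assoc_mat[of _ N N _ N] mult_smult_distrib[of _ N N _ N])
    then have "(1/c) \<cdot>\<^sub>m (c \<cdot>\<^sub>m (pmat R * ?Z)) = (1/c) \<cdot>\<^sub>m (c \<cdot>\<^sub>m (?Z * pmat R))" by simp
    then show ?thesis using c by (simp add: smult_smult_m)
  qed
  have Rpos: "R ! (k + j - 1) = PI \<or> R ! (k + j - 1) = PZ" if j: "1 \<le> j" "j \<le> n-k" for j
  proof -
    let ?Z = "zl n k {j}"
    have t: "k + j - 1 < length R" using j lenR kn by simp
    have Zt: "?Z ! (k+j-1) = PZ" using j kn by (simp add: zl_def zq_def nth_append)
    have Zo: "?Z ! i = PI" if "i < length R" "i \<noteq> k+j-1" for i
      using that j kn lenR by (auto simp: zl_def zq_def nth_append)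
    have pe: "peps R ?Z = eps (R!(k+j-1)) PZ"
      using peps_single[of R ?Z "k+j-1"] t Zt Zo lenR by simp
    have "eps (R!(k+j-1)) PZ = 1"
    proof (rule ccontr)
      assume "eps (R!(k+j-1)) PZ \<noteq> 1"
      then have m1: "peps R ?Z = -1" using pe eps_pm by metis
      have "pmat R * pmat ?Z = peps R ?Z \<cdot>\<^sub>m (pmat ?Z * pmat R)" using pmat_comm[of R ?Z] lenR by simp
      then have "pmat ?Z * pmat R = (-1::complex) \<cdot>\<^sub>m (pmat ?Z * pmat R)" using Rcomm[OF j] m1 by metis
      then have z: "pmat ?Z * pmat R = 0\<^sub>m N N" using PR by (intro mat_neg_self_zero) auto
      have "(pmat ?Z * pmat R) * (pmat R * pmat ?Z) = pmat ?Z * (pmat R * pmat R) * pmat ?Z"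
        using PR by (simp add: assoc_mult_mat[of _ N N _ N _ N])
      also have "\<dots> = 1\<^sub>m N" using lenR pmat_sq[of R] by (simp add: zl_sq)
      finally have "0\<^sub>m N N * (pmat R * pmat ?Z) = 1\<^sub>m N" using z by simp
      moreover have "0\<^sub>m N N * (pmat R * pmat ?Z) = 0\<^sub>m N N" by (rule left_mult_zero_mat) (use PR in auto)
      ultimately have "(0\<^sub>m N N :: complex mat) = 1\<^sub>m N" by simp
      then have "(0\<^sub>m N N :: complex mat) $$ (0,0) = 1\<^sub>m N $$ (0,0)" by simp
      then show False by simp
    qed
    then show ?thesis by (cases "R!(k+j-1)") (auto simp: eps_def)
  qed
  define J where "J = {j. 1 \<le> j \<and> j \<le> n-k \<and> R ! (k+j-1) = PZ}"
  have RJ: "R = zl n k J"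
  proof (rule nth_equalityI)
    show "length R = length (zl n k J)" using lenR by simp
    fix i assume i: "i < length R"
    show "R ! i = zl n k J ! i"
    proof (cases "i < k")
      case True
      then have "R ! i \<in> set (take k R)" using i by (metis in_set_conv_nth length_take min_less_iff_conj nth_take)
      then have "R ! i = PI" using R1 by auto
      then show ?thesis using True by (simp add: zl_def nth_append)
    next
      case False
      let ?j = "i - k + 1"
      have j: "1 \<le> ?j" "?j \<le> n-k" using False i lenR by auto
      have ij: "k + ?j - 1 = i" using False by simp
      have "zl n k J ! i = (if ?j \<in> J then PZ else PI)" using False i lenR kn
        by (simp add: zl_def zq_def nth_append)
      then show ?thesis using Rpos[OF j] unfolding ij J_def using j ij by auto
    qed
  qed
  have "?HE = U * (adj U * ?HE * U) * adj U" using conj_fwd[OF HE] by simp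
  also have "\<dots> = c \<cdot>\<^sub>m (U * pmat (zl n k J) * adj U)" unfolding B RJ[symmetric] using PR by (simp add: conj_smult)
  finally have HEg: "?HE = c \<cdot>\<^sub>m (U * pmat (zl n k J) * adj U)" .
  let ?g = "U * pmat (zl n k J) * adj U"
  have gS: "?g \<in> stabilizer n k U" by (rule stab_in)
  have hh: "pmat ?h * pmat ?h = 1\<^sub>m N" using hP pmat_sq[of ?h] by (simp add: paulis_def)
  have "pmat ?h * ?g = (1/c) \<cdot>\<^sub>m (pmat ?h * ?HE)"
    unfolding HEg using c H by (simp add: mult_smult_distrib[of _ N N _ N] smult_smult_m)
  also have "pmat ?h * ?HE = pmat E" using H PE hh left_mult_one_mat[OF PE] by (simp add: assoc_mult_mat[of _ N N _ N _ N, symmetric])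
  finally have "pmat ?h * ?g = (1/c) \<cdot>\<^sub>m pmat E" .
  moreover have "?h \<in> rep_set (n-k) Es" using ls by (auto simp: rep_set_def syndromes_def)
  ultimately show ?thesis unfolding TS_set_def using EP gS c
    by (intro CollectI conjI) (auto intro!: bexI[of _ ?h] bexI[of _ ?g] exI[of _ "1/c"])
qed

end

context code_T begin

definition Bm :: "pauli list \<Rightarrow> complex mat" where
  "Bm E = adj U * pmat (Es (syndrome n k U E)) * pmat E * U"

lemma KEY:
  assumes EP: "E \<in> paulis n"
  shows "(\<Sum>l<b. (\<Sum>i<m. Bm E $$ (i*b+l, i*b)) * cnj (\<Sum>j<m. Bm E $$ (j*b+l, j*b)))
       = (if E \<in> TS_set n k U Es then of_nat m * of_nat m else 0)"
proof -
  let ?s = "syndrome n k U E"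
  let ?h = "Es ?s"
  have ls: "length ?s = n - k" by simp
  have hP: "?h \<in> paulis n" using Es_paulis[OF ls] .
  have H: "pmat ?h \<in> carrier_mat N N" using hP by simp
  have PE: "pmat E \<in> carrier_mat N N" using EP by simp
  have lens: "length ?h = length E" using hP EP by (simp add: paulis_def)
  have pmP: "pmul ?h E \<in> paulis n" using hP EP by (simp add: paulis_def)
  obtain R c1 where R: "R \<in> paulis n" "cmod c1 = 1" "adj U * pmat (pmul ?h E) * U = c1 \<cdot>\<^sub>m pmat R"
    using clif_inv[OF pmP] by blast
  define c where "c = pprod ?h E * c1"
  have cn: "cmod c = 1" using R(2) pprod_norm by (simp add: c_def norm_mult)
  have c0: "c \<noteq> 0" using cn by auto
  have ccnj: "c * cnj c = 1" using cn by (metis complex_norm_square of_real_1 power_one)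
  have BHE: "Bm E = adj U * (pmat ?h * pmat E) * U"
    unfolding Bm_def using H PE by (simp add: assoc_mult_mat[of _ N N _ N _ N])
  have BR: "adj U * (pmat ?h * pmat E) * U = c \<cdot>\<^sub>m pmat R"
    using H PE lens R(3) conj_smult'[OF pmat_paulis[OF pmP]] by (simp add: pmat_mult c_def smult_smult_m)
  have lenR: "length R = n" using R by (simp add: paulis_def)
  define R1 R2 where "R1 = take k R" "R2 = drop k R"
  have len12: "length R1 = k" "length R2 = n - k" using lenR kn by (simp_all add: R1_R2_def)
  have PR: "pmat R = kron (pmat R1) (pmat R2)" unfolding R1_R2_def pmat_append[symmetric] by simp
  define tr where "tr = (\<Sum>i<m. pmat R1 $$ (i,i))"
  have tr: "tr = (if set R1 \<subseteq> {PI} then of_nat m else 0)" using pmat_trace[of R1] len12 by (simp add: tr_def)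
  have entry: "Bm E $$ (i*b+l, i*b) = c * (pmat R1 $$ (i,i) * pmat R2 $$ (l,0))" if "i < m" "l < b" for i l
  proof -
    have d: "(i*b+l) div b = i" "(i*b+l) mod b = l" "i*b+l < m*b" using divmod_lt[OF that] by auto
    have d0: "(i*b) div b = i" "(i*b) mod b = 0" "i*b < m*b" using divmod_lt[OF that(1), of 0 b] by auto
    have "Bm E $$ (i*b+l, i*b) = c * pmat R $$ (i*b+l, i*b)"
      using BHE BR d(3) d0(3) mb lenR by simp
    also have "pmat R $$ (i*b+l, i*b) = pmat R1 $$ (i,i) * pmat R2 $$ (l,0)"
      unfolding PR using d d0 len12 by simp
    finally show ?thesis .
  qed
  have rowsum: "(\<Sum>i<m. Bm E $$ (i*b+l, i*b)) = c * tr * pmat R2 $$ (l,0)" if "l < b" for l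
    using that by (simp add: entry tr_def sum_distrib_left sum_distrib_right mult_ac)
  have "(\<Sum>l<b. (\<Sum>i<m. Bm E $$ (i*b+l, i*b)) * cnj (\<Sum>j<m. Bm E $$ (j*b+l, j*b)))
      = (\<Sum>l<b. (c * cnj c) * (tr * cnj tr) * (pmat R2 $$ (l,0) * cnj (pmat R2 $$ (l,0))))"
    by (intro sum.cong refl) (simp add: rowsum mult_ac)
  also have "\<dots> = tr * cnj tr"
    using pmat_col_norm[of R2] len12 by (simp add: ccnj sum_distrib_left[symmetric])
  also have "\<dots> = (if set R1 \<subseteq> {PI} then of_nat m * of_nat m else 0)" by (simp add: tr)
  also have "(set R1 \<subseteq> {PI}) = (E \<in> TS_set n k U Es)"
  proof
    assume "set R1 \<subseteq> {PI}"
    then show "E \<in> TS_set n k U Es" by (intro imp_TS[OF EP R(1) c0 BR]) (simp add: R1_R2_def)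
  next
    assume "E \<in> TS_set n k U Es"
    then obtain J c0' where J: "c0' \<noteq> 0" "pmat ?h * pmat E = c0' \<cdot>\<^sub>m (U * pmat (zl n k J) * adj U)"
      using TS_imp by blast
    have "c \<cdot>\<^sub>m pmat R = c0' \<cdot>\<^sub>m pmat (zl n k J)"
      unfolding BR[symmetric] J(2) by (simp add: conj_smult' conj_back)
    then have "R = zl n k J" using pmat_inj[of R "zl n k J" c c0'] c0 lenR by simp
    then show "set R1 \<subseteq> {PI}" unfolding R1_R2_def by (simp add: zl_def set_replicate_conv_if)
  qed
  finally show ?thesis .
qed

end

lemma kron_ebasis:
  assumes "i < a" "j < a" "i' < b" "j' < b"
  shows "kron (ebasis a i j) (ebasis b i' j') = ebasis (a*b) (i*b+i') (j*b+j')"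
proof (rule eq_matI)
  fix r c assume "r < dim_row (ebasis (a*b) (i*b+i') (j*b+j'))" "c < dim_col (ebasis (a*b) (i*b+i') (j*b+j'))"
  then have rc: "r < a*b" "c < a*b" by auto
  have d: "r div b < a" "r mod b < b" "c div b < a" "c mod b < b" using rc divmod_bound by auto
  have e1: "(r = i*b+i') = (r div b = i \<and> r mod b = i')"
    using idx_eq_divmod[of r "i*b+i'" b] divmod_lt[OF assms(1,3)] by auto
  have e2: "(c = j*b+j') = (c div b = j \<and> c mod b = j')"
    using idx_eq_divmod[of c "j*b+j'" b] divmod_lt[OF assms(2,4)] by auto
  show "kron (ebasis a i j) (ebasis b i' j') $$ (r,c) = ebasis (a*b) (i*b+i') (j*b+j') $$ (r,c)"
    using rc d e1 e2 by auto
qed auto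

lemma zero_proj_eq: "zero_proj t = ebasis (2^t) 0 0"
proof (induction t)
  case 0 then show ?case by (rule eq_matI) auto
next
  case (Suc t)
  show ?case using kron_ebasis[of 0 2 0 0 "2^t"] by (simp add: Suc)
qed

lemma finite_syndromes[simp]: "finite (syndromes t)"
proof -
  have "syndromes t = {xs. set xs \<subseteq> (UNIV::bool set) \<and> length xs = t}" by (auto simp: syndromes_def)
  then show ?thesis using finite_lists_length_eq[of "UNIV :: bool set" t] by simp
qed

context code_T begin

lemma encode_eb: "i < m \<Longrightarrow> j < m \<Longrightarrow> encode n k U (ebasis m i j) = U * ebasis N (i*b) (j*b) * adj U"
  unfolding encode_def zero_proj_eq using kron_ebasis[of i m j 0 b] mb by simp

lemma GEN:
  assumes L: "L \<in> carrier_mat N N" and R: "R \<in> carrier_mat N N" and ac: "a < N" "c < N" and xy: "x < N" "y < N"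
  shows "(L * msum N (\<lambda>E. complex_of_real (perr p E) \<cdot>\<^sub>m (pmat E * (U * ebasis N a c * adj U) * pmat E)) (paulis n) * R) $$ (x,y)
     = (\<Sum>E\<in>paulis n. complex_of_real (perr p E) * ((L * pmat E * U) $$ (x,a) * (adj U * pmat E * R) $$ (c,y)))"
proof -
  let ?Y = "msum N (\<lambda>E. complex_of_real (perr p E) \<cdot>\<^sub>m (pmat E * (U * ebasis N a c * adj U) * pmat E)) (paulis n)"
  have Yuv: "?Y $$ (u,v) = (\<Sum>E\<in>paulis n. complex_of_real (perr p E) * ((pmat E * U) $$ (u,a) * (adj U * pmat E) $$ (c,v)))"
    if uv: "u < N" "v < N" for u v
  proof -
    have "?Y $$ (u,v) = (\<Sum>E\<in>paulis n. (complex_of_real (perr p E) \<cdot>\<^sub>m (pmat E * (U * ebasis N a c * adj U) * pmat E)) $$ (u,v))"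
      using uv by simp
    also have "\<dots> = (\<Sum>E\<in>paulis n. complex_of_real (perr p E) * ((pmat E * U) $$ (u,a) * (adj U * pmat E) $$ (c,v)))"
    proof (intro sum.cong refl)
      fix E assume E: "E \<in> paulis n"
      have PE: "pmat E \<in> carrier_mat N N" using E by simp
      have "pmat E * (U * ebasis N a c * adj U) * pmat E = (pmat E * U) * ebasis N a c * (adj U * pmat E)"
        using PE by (simp add: assoc_mult_mat[of _ N N _ N _ N])
      then show "(complex_of_real (perr p E) \<cdot>\<^sub>m (pmat E * (U * ebasis N a c * adj U) * pmat E)) $$ (u,v)
          = complex_of_real (perr p E) * ((pmat E * U) $$ (u,a) * (adj U * pmat E) $$ (c,v))"
        using PE uv ac by (simp add: smult_sandwich_ebasis[of _ N N _ N] del: index_mult_mat)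
    qed
    finally show ?thesis .
  qed
  have Y: "?Y \<in> carrier_mat N N" by simp
  have "(L * ?Y * R) $$ (x,y) = (\<Sum>u<N. \<Sum>v<N. L$$(x,u) * ?Y$$(u,v) * R$$(v,y))"
    by (rule triple_entry[OF L Y R xy])
  also have "\<dots> = (\<Sum>u<N. \<Sum>v<N. \<Sum>E\<in>paulis n. complex_of_real (perr p E) * ((L$$(x,u) * (pmat E * U) $$ (u,a)) * ((adj U * pmat E) $$ (c,v) * R$$(v,y))))"
    by (intro sum.cong refl) (simp add: Yuv sum_distrib_left sum_distrib_right mult_ac del: msum_index)
  also have "\<dots> = (\<Sum>E\<in>paulis n. \<Sum>u<N. \<Sum>v<N. complex_of_real (perr p E) * ((L$$(x,u) * (pmat E * U) $$ (u,a)) * ((adj U * pmat E) $$ (c,v) * R$$(v,y))))"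
    by (simp only: sum.swap[where A="paulis n"])
  also have "\<dots> = (\<Sum>E\<in>paulis n. complex_of_real (perr p E) * ((L * pmat E * U) $$ (x,a) * (adj U * pmat E * R) $$ (c,y)))"
  proof (intro sum.cong refl)
    fix E assume E: "E \<in> paulis n"
    have PE: "pmat E \<in> carrier_mat N N" using E by simp
    have 1: "(L * pmat E * U) $$ (x,a) = (\<Sum>u<N. L$$(x,u) * (pmat E * U) $$ (u,a))"
      using PE L xy ac by (simp add: assoc_mult_mat[of _ N N _ N _ N] mult_entry[of _ N N _ N] del: index_mult_mat)
    have 2: "(adj U * pmat E * R) $$ (c,y) = (\<Sum>v<N. (adj U * pmat E) $$ (c,v) * R$$(v,y))"
      using PE R xy ac by (simp add: mult_entry[of _ N N _ N] del: index_mult_mat)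
    show "(\<Sum>u<N. \<Sum>v<N. complex_of_real (perr p E) * ((L$$(x,u) * (pmat E * U) $$ (u,a)) * ((adj U * pmat E) $$ (c,v) * R$$(v,y))))
       = complex_of_real (perr p E) * ((L * pmat E * U) $$ (x,a) * (adj U * pmat E * R) $$ (c,y))"
      unfolding 1 2 by (simp add: sum_distrib_left sum_product mult_ac, rule sum.swap)
  qed
  finally show ?thesis .
qed

end

context code_T begin

lemma multNm[simp]: "X \<in> carrier_mat N N \<Longrightarrow> Y \<in> carrier_mat N m \<Longrightarrow> X * Y \<in> carrier_mat N m"
  for X Y :: "complex mat" by simp

lemma ib_lt: "i < m \<Longrightarrow> l < b \<Longrightarrow> i*b+l < N"
  using divmod_lt[of i m l b] mb by simp

lemma decode_entry:
  assumes "i < m" "j < m"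
  shows "decode n k U Es X $$ (i,j) = (\<Sum>l<b. \<Sum>s\<in>syndromes (n-k).
     (adj U * pmat (Es s) * proj n k U s * X * proj n k U s * adj (pmat (Es s)) * U) $$ (i*b+l, j*b+l))"
  unfolding decode_def ptrace2_def using assms ib_lt by simp

lemma Es_carrier[simp]: "s \<in> syndromes (n-k) \<Longrightarrow> pmat (Es s) \<in> carrier_mat N N"
  using Es_paulis by (simp add: syndromes_def)

lemma reassoc:
  assumes "s \<in> syndromes (n-k)" "X \<in> carrier_mat N N"
  shows "adj U * pmat (Es s) * proj n k U s * X * proj n k U s * adj (pmat (Es s)) * U
       = (adj U * pmat (Es s) * proj n k U s) * X * (proj n k U s * adj (pmat (Es s)) * U)"
  using assms by (simp add: assoc_mult_mat[of _ N N _ N _ N])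

lemma colL:
  assumes s: "length s = n-k" and E: "E \<in> paulis n" and x: "x < N" and i: "i < m"
  shows "(adj U * pmat (Es s) * proj n k U s * pmat E * U) $$ (x, i*b)
       = (if syndrome n k U E = s then Bm E $$ (x, i*b) else 0)"
proof -
  have S: "s \<in> syndromes (n-k)" using s by (simp add: syndromes_def)
  have H: "pmat (Es s) \<in> carrier_mat N N" using S by simp
  have PE: "pmat E \<in> carrier_mat N N" using E by simp
  let ?T = "adj U * pmat (Es s) * proj n k U s * pmat E * U"
  let ?B = "adj U * pmat (Es s) * pmat E * U"
  have T: "?T \<in> carrier_mat N N" using H PE by simp
  have "?T $$ (x, i*b) = (?T * V0) $$ (x,i)" using AV0[OF T x i] by simp
  also have "?T * V0 = (adj U * pmat (Es s)) * (proj n k U s * (pmat E * (U * V0)))"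
    using H PE by (simp add: assoc_mult_mat[of _ N N _ N _ N] assoc_mult_mat[of _ N N _ N _ m])
  also have "\<dots> = (if syndrome n k U E = s then 1 else 0) \<cdot>\<^sub>m ((adj U * pmat (Es s)) * (pmat E * (U * V0)))"
    using H PE by (simp add: proj_col(1)[OF E s] mult_smult_distrib[of _ N N _ m])
  also have "(adj U * pmat (Es s)) * (pmat E * (U * V0)) = ?B * V0"
    using H PE by (simp add: assoc_mult_mat[of _ N N _ N _ N] assoc_mult_mat[of _ N N _ N _ m])
  finally have "?T $$ (x, i*b) = ((if syndrome n k U E = s then 1 else 0) \<cdot>\<^sub>m (?B * V0)) $$ (x,i)" .
  also have "\<dots> = (if syndrome n k U E = s then 1 else 0) * ?B $$ (x, i*b)"
    using x i H PE AV0[of ?B N x i] by simp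
  finally show ?thesis by (auto simp: Bm_def)
qed

lemma colR:
  assumes s: "length s = n-k" and E: "E \<in> paulis n" and y: "y < N" and j: "j < m"
  shows "(adj U * pmat E * (proj n k U s * adj (pmat (Es s)) * U)) $$ (j*b, y)
       = (if syndrome n k U E = s then cnj (Bm E $$ (y, j*b)) else 0)"
proof -
  have S: "s \<in> syndromes (n-k)" using s by (simp add: syndromes_def)
  have H: "pmat (Es s) \<in> carrier_mat N N" using S by simp
  have PE: "pmat E \<in> carrier_mat N N" using E by simp
  have P: "proj n k U s \<in> carrier_mat N N" by simp
  let ?T = "adj U * pmat (Es s) * adj (proj n k U s) * pmat E * U"
  let ?B = "adj U * pmat (Es s) * pmat E * U"
  have T: "?T \<in> carrier_mat N N" using H PE by simp
  have jb: "j*b < N" using ib_lt[OF j, of 0] by simp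
  have adjT: "adj ?T = adj U * pmat E * (proj n k U s * adj (pmat (Es s)) * U)"
    using H PE P by (simp add: adj_mult[of _ N N _ N] pmat_adj assoc_mult_mat[of _ N N _ N _ N])
  have "(adj U * pmat E * (proj n k U s * adj (pmat (Es s)) * U)) $$ (j*b, y) = cnj (?T $$ (y, j*b))"
    unfolding adjT[symmetric] using T y jb by simp
  also have "?T $$ (y, j*b) = (?T * V0) $$ (y,j)" using AV0[OF T y j] by simp
  also have "?T * V0 = (adj U * pmat (Es s)) * (adj (proj n k U s) * (pmat E * (U * V0)))"
    using H PE by (simp add: assoc_mult_mat[of _ N N _ N _ N] assoc_mult_mat[of _ N N _ N _ m])
  also have "\<dots> = (if syndrome n k U E = s then 1 else 0) \<cdot>\<^sub>m ((adj U * pmat (Es s)) * (pmat E * (U * V0)))"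
    using H PE by (simp add: proj_col(2)[OF E s] mult_smult_distrib[of _ N N _ m])
  also have "(adj U * pmat (Es s)) * (pmat E * (U * V0)) = ?B * V0"
    using H PE by (simp add: assoc_mult_mat[of _ N N _ N _ N] assoc_mult_mat[of _ N N _ N _ m])
  finally have "(adj U * pmat E * (proj n k U s * adj (pmat (Es s)) * U)) $$ (j*b, y)
      = cnj (((if syndrome n k U E = s then 1 else 0) \<cdot>\<^sub>m (?B * V0)) $$ (y,j))" .
  also have "\<dots> = cnj ((if syndrome n k U E = s then 1 else 0) * ?B $$ (y, j*b))"
    using y j H PE AV0[of ?B N y j] by simp
  finally show ?thesis by (auto simp: Bm_def)
qed

end

context code_T begin

lemma Ef_entry:
  assumes i: "i < m" and j: "j < m"
  shows "decode n k U Es (depol n p (encode n k U (ebasis m i j))) $$ (i,j)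
    = (\<Sum>l<b. \<Sum>E\<in>paulis n. complex_of_real (perr p E) * (Bm E $$ (i*b+l, i*b) * cnj (Bm E $$ (j*b+l, j*b))))"
proof -
  have e: "U * ebasis N (i*b) (j*b) * adj U \<in> carrier_mat N N" by simp
  let ?Y = "msum N (\<lambda>E. complex_of_real (perr p E) \<cdot>\<^sub>m (pmat E * (U * ebasis N (i*b) (j*b) * adj U) * pmat E)) (paulis n)"
  have Y: "depol n p (encode n k U (ebasis m i j)) = ?Y"
    unfolding encode_eb[OF i j] by (rule depol_msum[OF e])
  have ib: "i*b < N" "j*b < N" using ib_lt[OF i, of 0] ib_lt[OF j, of 0] by auto
  have "decode n k U Es ?Y $$ (i,j) = (\<Sum>l<b. \<Sum>s\<in>syndromes (n-k).
     (adj U * pmat (Es s) * proj n k U s * ?Y * proj n k U s * adj (pmat (Es s)) * U) $$ (i*b+l, j*b+l))"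
    by (rule decode_entry[OF i j])
  also have "\<dots> = (\<Sum>l<b. \<Sum>s\<in>syndromes (n-k). \<Sum>E\<in>paulis n. complex_of_real (perr p E) *
      (if syndrome n k U E = s then Bm E $$ (i*b+l, i*b) * cnj (Bm E $$ (j*b+l, j*b)) else 0))"
  proof (intro sum.cong refl)
    fix l s assume l: "l \<in> {..<b}" and s: "s \<in> syndromes (n-k)"
    have ls: "length s = n - k" using s by (simp add: syndromes_def)
    have x: "i*b+l < N" "j*b+l < N" using l ib_lt i j by auto
    have "(adj U * pmat (Es s) * proj n k U s * ?Y * proj n k U s * adj (pmat (Es s)) * U) $$ (i*b+l, j*b+l)
       = ((adj U * pmat (Es s) * proj n k U s) * ?Y * (proj n k U s * adj (pmat (Es s)) * U)) $$ (i*b+l, j*b+l)"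
      by (simp only: reassoc[OF s msum_carrier])
    also have "\<dots> = (\<Sum>E\<in>paulis n. complex_of_real (perr p E) *
        ((adj U * pmat (Es s) * proj n k U s * pmat E * U) $$ (i*b+l, i*b) *
         (adj U * pmat E * (proj n k U s * adj (pmat (Es s)) * U)) $$ (j*b, j*b+l)))"
      by (rule GEN) (use s x ib in auto)
    also have "\<dots> = (\<Sum>E\<in>paulis n. complex_of_real (perr p E) *
      (if syndrome n k U E = s then Bm E $$ (i*b+l, i*b) * cnj (Bm E $$ (j*b+l, j*b)) else 0))"
      by (intro sum.cong refl) (simp add: colL[OF ls _ x(1) i] colR[OF ls _ x(2) j])
    finally show "(adj U * pmat (Es s) * proj n k U s * ?Y * proj n k U s * adj (pmat (Es s)) * U) $$ (i*b+l, j*b+l)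
      = (\<Sum>E\<in>paulis n. complex_of_real (perr p E) *
      (if syndrome n k U E = s then Bm E $$ (i*b+l, i*b) * cnj (Bm E $$ (j*b+l, j*b)) else 0))" .
  qed
  also have "\<dots> = (\<Sum>l<b. \<Sum>E\<in>paulis n. \<Sum>s\<in>syndromes (n-k). complex_of_real (perr p E) *
      (if syndrome n k U E = s then Bm E $$ (i*b+l, i*b) * cnj (Bm E $$ (j*b+l, j*b)) else 0))"
    by (rule sum.cong[OF refl], rule sum.swap)
  also have "\<dots> = (\<Sum>l<b. \<Sum>E\<in>paulis n. complex_of_real (perr p E) * (Bm E $$ (i*b+l, i*b) * cnj (Bm E $$ (j*b+l, j*b))))"
  proof (intro sum.cong refl)
    fix l E assume "E \<in> paulis n"
    have "syndrome n k U E \<in> syndromes (n-k)" by (simp add: syndromes_def)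
    then show "(\<Sum>s\<in>syndromes (n-k). complex_of_real (perr p E) *
      (if syndrome n k U E = s then Bm E $$ (i*b+l, i*b) * cnj (Bm E $$ (j*b+l, j*b)) else 0))
      = complex_of_real (perr p E) * (Bm E $$ (i*b+l, i*b) * cnj (Bm E $$ (j*b+l, j*b)))"
      by (simp add: if_distrib[of "\<lambda>z. complex_of_real (perr p E) * z"] cong: if_cong)
  qed
  finally show ?thesis unfolding Y .
qed

lemma FID: "chan_fid m (\<lambda>\<rho>. decode n k U Es (depol n p (encode n k U \<rho>)))
     = complex_of_real (\<Sum>E\<in>TS_set n k U Es. perr p E)"
proof -
  let ?Ef = "\<lambda>\<rho>. decode n k U Es (depol n p (encode n k U \<rho>))"
  have C: "?Ef (ebasis m i j) \<in> carrier_mat m m" for i j by (simp add: decode_def ptrace2_def)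
  have m0: "m > 0" by simp
  have "chan_fid m ?Ef = (\<Sum>i<m. \<Sum>j<m. ?Ef (ebasis m i j) $$ (i,j)) / (of_nat m * of_nat m)"
    by (rule chan_fid_formula) (use m0 C in auto)
  also have "(\<Sum>i<m. \<Sum>j<m. ?Ef (ebasis m i j) $$ (i,j))
     = (\<Sum>i<m. \<Sum>j<m. \<Sum>l<b. \<Sum>E\<in>paulis n. complex_of_real (perr p E) * (Bm E $$ (i*b+l, i*b) * cnj (Bm E $$ (j*b+l, j*b))))"
    by (intro sum.cong refl) (simp add: Ef_entry)
  also have "\<dots> = (\<Sum>E\<in>paulis n. \<Sum>l<b. \<Sum>i<m. \<Sum>j<m. complex_of_real (perr p E) * (Bm E $$ (i*b+l, i*b) * cnj (Bm E $$ (j*b+l, j*b))))"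
    by (simp only: sum.swap[where B="paulis n"], rule sum.cong[OF refl], simp only: sum.swap[where B="{..<b}"])
  also have "\<dots> = (\<Sum>E\<in>paulis n. complex_of_real (perr p E) *
      (\<Sum>l<b. (\<Sum>i<m. Bm E $$ (i*b+l, i*b)) * cnj (\<Sum>j<m. Bm E $$ (j*b+l, j*b))))"
    by (simp only: cnj_sum sum_product, simp only: sum_distrib_left)
  also have "\<dots> = (\<Sum>E\<in>paulis n. complex_of_real (perr p E) * (if E \<in> TS_set n k U Es then of_nat m * of_nat m else 0))"
    by (intro sum.cong refl) (simp only: KEY)
  also have "\<dots> = (\<Sum>E\<in>TS_set n k U Es. complex_of_real (perr p E)) * (of_nat m * of_nat m)"
  proof -
    have sub: "TS_set n k U Es \<subseteq> paulis n" by (auto simp: TS_set_def)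
    have "(\<Sum>E\<in>paulis n. complex_of_real (perr p E) * (if E \<in> TS_set n k U Es then of_nat m * of_nat m else 0))
        = (\<Sum>E\<in>paulis n. if E \<in> TS_set n k U Es then complex_of_real (perr p E) * (of_nat m * of_nat m) else 0)"
      by (intro sum.cong refl) auto
    also have "\<dots> = (\<Sum>E\<in>paulis n \<inter> TS_set n k U Es. complex_of_real (perr p E) * (of_nat m * of_nat m))"
      by (rule sum.inter_restrict[OF finite_paulis, symmetric])
    also have "paulis n \<inter> TS_set n k U Es = TS_set n k U Es" using sub by auto
    finally show ?thesis by (simp add: sum_distrib_right)
  qed
  finally show ?thesis by simp
qed

end

lemma weight_Cons: "weight (a#E) = (if a = PI then 0 else 1) + weight E"
  by (simp add: weight_def)
lemma weight_le: "weight E \<le> length E"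
  by (simp add: weight_def)

lemma perr_weight: "perr p E = (1 - 3/4*p)^(length E - weight E) * (p/4)^(weight E)"
proof (induction E)
  case Nil then show ?case by (simp add: perr_Nil weight_def)
next
  case (Cons a E)
  have le: "weight E \<le> length E" by (rule weight_le)
  show ?case
  proof (cases "a = PI")
    case True
    have "Suc (length E) - weight E = Suc (length E - weight E)" using le by simp
    then show ?thesis using True Cons by (simp add: perr_Cons weight_Cons w1_def)
  next
    case False
    then show ?thesis using Cons by (simp add: perr_Cons weight_Cons w1_def)
  qed
qed

lemma finite_TS[simp]: "finite (TS_set n k U Es)"
  by (rule finite_subset[OF _ finite_paulis[of n]]) (auto simp: TS_set_def)

lemma enum:
  "(\<Sum>E\<in>TS_set n k U Es. perr p E)
   = (\<Sum>w=0..n. real (card {E\<in>TS_set n k U Es. weight E = w}) * (1 - 3/4 * p) ^ (n - w) * (p/4) ^ w)"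
proof -
  let ?T = "TS_set n k U Es"
  let ?g = "\<lambda>w. (1 - 3/4 * p) ^ (n - w) * (p/4) ^ w"
  have lenT: "E \<in> ?T \<Longrightarrow> length E = n" for E by (auto simp: TS_set_def paulis_def)
  have "(\<Sum>E\<in>?T. perr p E) = (\<Sum>E\<in>?T. ?g (weight E))"
    by (intro sum.cong refl) (simp add: perr_weight lenT)
  also have "\<dots> = (\<Sum>w\<in>{0..n}. \<Sum>E\<in>{x. x \<in> ?T \<and> weight x = w}. ?g (weight E))"
    by (rule sum.group[symmetric]) (use lenT weight_le in \<open>fastforce+\<close>)
  also have "\<dots> = (\<Sum>w\<in>{0..n}. real (card {E\<in>?T. weight E = w}) * ?g w)"
  proof (intro sum.cong refl)
    fix w
    have "(\<Sum>E\<in>{x. x \<in> ?T \<and> weight x = w}. ?g (weight E)) = (\<Sum>E\<in>{x. x \<in> ?T \<and> weight x = w}. ?g w)"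
      by (intro sum.cong refl) auto
    then show "(\<Sum>E\<in>{x. x \<in> ?T \<and> weight x = w}. ?g (weight E)) = real (card {E\<in>?T. weight E = w}) * ?g w"
      by simp
  qed
  finally show ?thesis by (simp add: mult.assoc)
qed

theorem theorem4:
  fixes n k :: nat and U :: "complex mat" and Es :: "bool list \<Rightarrow> pauli list" and p :: real
  assumes "k \<le> n"
    and "clifford n U"
    and "syndrome_reps n k U Es"
    and "0 \<le> p" and "p \<le> 1"
  shows "chan_fid (2^k) (\<lambda>\<rho>. decode n k U Es (depol n p (encode n k U \<rho>)))
           = complex_of_real (\<Sum>E\<in>TS_set n k U Es. perr p E)
       \<and> (\<Sum>E\<in>TS_set n k U Es. perr p E)
           = (\<Sum>w=0..n. real (card {E\<in>TS_set n k U Es. weight E = w})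
                          * (1 - 3/4 * p) ^ (n - w) * (p/4) ^ w)"
proof
  interpret code_T n k U Es
    by unfold_locales (use assms in auto)
  show "chan_fid (2^k) (\<lambda>\<rho>. decode n k U Es (depol n p (encode n k U \<rho>)))
           = complex_of_real (\<Sum>E\<in>TS_set n k U Es. perr p E)" by (rule FID)
  show "(\<Sum>E\<in>TS_set n k U Es. perr p E)
           = (\<Sum>w=0..n. real (card {E\<in>TS_set n k U Es. weight E = w})
                          * (1 - 3/4 * p) ^ (n - w) * (p/4) ^ w)" by (rule enum)
qed

end
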